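(* Let $\Phi\in\mathit{NCB}_{\mathcal D}(\mathcal B(\mathcal H))$ with symbol $\Gamma(\Phi)=[\phi]$. Suppose $\{R_j\}_{j\ge1}$ and $\{C_j\}_{j\ge1}$ are two countable Borel partitions of $X$ such that $\phi^{-1}(\mathbb C\setminus\{0\})\subseteq\bigcup_{j\ge1}R_j\times C_j$. For each $j$ let $\Phi_j\in\mathit{NCB}_{\mathcal D}(\mathcal B(\mathcal H))$ be the map with $\Gamma(\Phi_j)=[\chi_{R_j\times C_j}\cdot\phi]$. Then $\|\Phi\|=\sup_j\|\Phi_j\|$.
   Context: $(X,\mu)$ is a standard finite measure space, $\mathcal H=L^2(X,\mu)$, and $\mathcal D=L^\infty(X,\mu)$ acting by multiplication (a masa in $\mathcal B(\mathcal H)$). $\mathit{NCB}_{\mathcal D}(\mathcal B(\mathcal H))$ is the set of normal completely bounded linear maps $\mathcal B(\mathcal H)\to\mathcal B(\mathcal H)$ that are $\mathcal D$-bimodule maps. A set $E\subseteq X\times X$ is marginally null if $E\subseteq (N\times X)\cup(X\times N)$ for a $\mu$-null $N$; Borel functions on $X\times X$ are identified if they agree off a marginally null set, $[\phi]$ denoting the class of $\phi$. There is a bijection $\Gamma$ from $\mathit{NCB}_{\mathcal D}(\mathcal B(\mathcal H))$ onto the classes $[\langle f,g\rangle]$, $f,g\in L^\infty(X,\ell^2)$ (where $\langle f,g\rangle(s,t)=\langle f(s),g(t)\rangle$), such that for $\phi\in\Gamma(\Phi)$ the map $\Phi$ is the normal extension to $\mathcal B(\mathcal H)$ of the map sending a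 Hilbert–Schmidt operator with integral kernel $k$ to the one with kernel $\phi k$; $\Gamma(\Phi)$ is called the symbol of $\Phi$. $\chi_S$ is the indicator function of $S$. *)

theory Defs
  imports "HOL-Analysis.Analysis"
begin

text \<open>Concrete model of H = L^2(X,mu): vectors are functions X => complex that are
square integrable; vectors agreeing mu-a.e. are identified. Operators are maps on
such functions; B(H) is modelled by bounded, linear, a.e.-respecting operators,
and two operators are identified if they agree (a.e.) on every vector.\<close>

definition L2 :: "'a measure \<Rightarrow> ('a \<Rightarrow> complex) set" where
  "L2 M = {f. f \<in> borel_measurable M \<and> integrable M (\<lambda>x. (cmod (f x))\<^sup>2)}"

definition l2inner :: "'a measure \<Rightarrow> ('a \<Rightarrow> complex) \<Rightarrow> ('a \<Rightarrow> complex) \<Rightarrow> complex" where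
  "l2inner M f g = (LINT x|M. f x * cnj (g x))"

definition l2norm :: "'a measure \<Rightarrow> ('a \<Rightarrow> complex) \<Rightarrow> real" where
  "l2norm M f = sqrt (LINT x|M. (cmod (f x))\<^sup>2)"

definition ae_eq :: "'a measure \<Rightarrow> ('a \<Rightarrow> complex) \<Rightarrow> ('a \<Rightarrow> complex) \<Rightarrow> bool" where
  "ae_eq M f g \<longleftrightarrow> (AE x in M. f x = g x)"

type_synonym 'a op = "('a \<Rightarrow> complex) \<Rightarrow> ('a \<Rightarrow> complex)"

definition bop :: "'a measure \<Rightarrow> 'a op \<Rightarrow> bool" where
  "bop M T \<longleftrightarrow>
     (\<forall>f\<in>L2 M. T f \<in> L2 M) \<and>
     (\<forall>f\<in>L2 M. \<forall>g\<in>L2 M. ae_eq M f g \<longrightarrow> ae_eq M (T f) (T g)) \<and>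
     (\<forall>f\<in>L2 M. \<forall>g\<in>L2 M. \<forall>c::complex.
        ae_eq M (T (\<lambda>x. c * f x + g x)) (\<lambda>x. c * T f x + T g x)) \<and>
     (\<exists>C. \<forall>f\<in>L2 M. l2norm M (T f) \<le> C * l2norm M f)"

definition op_eq :: "'a measure \<Rightarrow> 'a op \<Rightarrow> 'a op \<Rightarrow> bool" where
  "op_eq M S T \<longleftrightarrow> (\<forall>f\<in>L2 M. ae_eq M (S f) (T f))"

definition opnorm :: "'a measure \<Rightarrow> 'a op \<Rightarrow> real" where
  "opnorm M T = Sup {l2norm M (T f) | f. f \<in> L2 M \<and> l2norm M f \<le> 1}"

definition op_add :: "'a op \<Rightarrow> 'a op \<Rightarrow> 'a op" where
  "op_add S T = (\<lambda>f x. S f x + T f x)"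

definition op_scale :: "complex \<Rightarrow> 'a op \<Rightarrow> 'a op" where
  "op_scale c T = (\<lambda>f x. c * T f x)"

text \<open>Multiplication operator by a (in D = L^infinity).\<close>
definition mult_op :: "('a \<Rightarrow> complex) \<Rightarrow> 'a op" where
  "mult_op a = (\<lambda>f x. a x * f x)"

definition Linf :: "'a measure \<Rightarrow> ('a \<Rightarrow> complex) set" where
  "Linf M = {a. a \<in> borel_measurable M \<and> (\<exists>C. AE x in M. cmod (a x) \<le> C)}"

definition matnorm :: "'a measure \<Rightarrow> nat \<Rightarrow> (nat \<Rightarrow> nat \<Rightarrow> 'a op) \<Rightarrow> real" where
  "matnorm M n A = Sup {sqrt (\<Sum>i<n. (l2norm M (\<lambda>x. \<Sum>j<n. A i j (\<xi> j) x))\<^sup>2) | \<xi>.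
       (\<forall>j<n. \<xi> j \<in> L2 M) \<and> (\<Sum>j<n. (l2norm M (\<xi> j))\<^sup>2) \<le> 1}"

text \<open>Normal (ultraweakly continuous) linear functionals on B(H):
  T |-> sum_n <T xi_n, eta_n> with sum ||xi_n||^2, sum ||eta_n||^2 finite.\<close>
definition tc_pair :: "'a measure \<Rightarrow> (nat \<Rightarrow> 'a \<Rightarrow> complex) \<Rightarrow> (nat \<Rightarrow> 'a \<Rightarrow> complex) \<Rightarrow> bool" where
  "tc_pair M \<xi> \<eta> \<longleftrightarrow> (\<forall>n. \<xi> n \<in> L2 M \<and> \<eta> n \<in> L2 M) \<and>
      summable (\<lambda>n. (l2norm M (\<xi> n))\<^sup>2) \<and> summable (\<lambda>n. (l2norm M (\<eta> n))\<^sup>2)"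

definition tc_fun :: "'a measure \<Rightarrow> (nat \<Rightarrow> 'a \<Rightarrow> complex) \<Rightarrow> (nat \<Rightarrow> 'a \<Rightarrow> complex) \<Rightarrow> 'a op \<Rightarrow> complex" where
  "tc_fun M \<xi> \<eta> T = (\<Sum>n. l2inner M (T (\<xi> n)) (\<eta> n))"

type_synonym 'a opmap = "'a op \<Rightarrow> 'a op"

text \<open>Phi in NCB_D(B(H)): linear map B(H) -> B(H), completely bounded, normal
  (weak*-weak* continuous), and a D-bimodule map.\<close>
definition NCB_D :: "'a measure \<Rightarrow> 'a opmap \<Rightarrow> bool" where
  "NCB_D M \<Phi> \<longleftrightarrow>
     (\<forall>T. bop M T \<longrightarrow> bop M (\<Phi> T)) \<and>
     (\<forall>S T. bop M S \<longrightarrow> bop M T \<longrightarrow> op_eq M S T \<longrightarrow> op_eq M (\<Phi> S) (\<Phi> T)) \<and>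
     (\<forall>S T c. bop M S \<longrightarrow> bop M T \<longrightarrow>
        op_eq M (\<Phi> (op_add (op_scale c S) T)) (op_add (op_scale c (\<Phi> S)) (\<Phi> T))) \<and>
     (\<exists>C. \<forall>n A. (\<forall>i<n. \<forall>j<n. bop M (A i j)) \<longrightarrow>
        matnorm M n (\<lambda>i j. \<Phi> (A i j)) \<le> C * matnorm M n A) \<and>
     (\<forall>\<xi> \<eta>. tc_pair M \<xi> \<eta> \<longrightarrow> (\<exists>\<xi>' \<eta>'. tc_pair M \<xi>' \<eta>' \<and>
        (\<forall>T. bop M T \<longrightarrow> tc_fun M \<xi> \<eta> (\<Phi> T) = tc_fun M \<xi>' \<eta>' T))) \<and>
     (\<forall>a\<in>Linf M. \<forall>b\<in>Linf M. \<forall>T. bop M T \<longrightarrow>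
        op_eq M (\<Phi> (mult_op a \<circ> T \<circ> mult_op b)) (mult_op a \<circ> \<Phi> T \<circ> mult_op b))"

definition mapnorm :: "'a measure \<Rightarrow> 'a opmap \<Rightarrow> real" where
  "mapnorm M \<Phi> = Sup {opnorm M (\<Phi> T) | T. bop M T \<and> opnorm M T \<le> 1}"

definition kernel_op :: "'a measure \<Rightarrow> ('a \<times> 'a \<Rightarrow> complex) \<Rightarrow> 'a op" where
  "kernel_op M k = (\<lambda>f s. LINT t|M. k (s, t) * f t)"

text \<open>L^infinity(X, l^2): l^2-valued functions, given coordinatewise.\<close>
definition Linf_l2 :: "'a measure \<Rightarrow> ('a \<Rightarrow> nat \<Rightarrow> complex) \<Rightarrow> bool" where
  "Linf_l2 M f \<longleftrightarrow> (\<forall>n. (\<lambda>x. f x n) \<in> borel_measurable M) \<and>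
     (\<exists>C. AE x in M. summable (\<lambda>n. (cmod (f x n))\<^sup>2) \<and> (\<Sum>n. (cmod (f x n))\<^sup>2) \<le> C)"

definition l2_inner :: "(nat \<Rightarrow> complex) \<Rightarrow> (nat \<Rightarrow> complex) \<Rightarrow> complex" where
  "l2_inner u v = (\<Sum>n. u n * cnj (v n))"

definition marg_eq :: "'a measure \<Rightarrow> ('a \<times> 'a \<Rightarrow> complex) \<Rightarrow> ('a \<times> 'a \<Rightarrow> complex) \<Rightarrow> bool" where
  "marg_eq M \<phi> \<psi> \<longleftrightarrow> (\<exists>N\<in>null_sets M. \<forall>s t. s \<notin> N \<longrightarrow> t \<notin> N \<longrightarrow> \<phi> (s, t) = \<psi> (s, t))"

text \<open>phi is a representative of the symbol Gamma(Phi): phi is Borel, lies in the class of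
  some <f,g> with f,g in L^infinity(X,l^2), and Phi maps the Hilbert-Schmidt operator with
  kernel k to the one with kernel phi k (Phi being the normal extension of this map).\<close>
definition has_symbol :: "'a measure \<Rightarrow> 'a opmap \<Rightarrow> ('a \<times> 'a \<Rightarrow> complex) \<Rightarrow> bool" where
  "has_symbol M \<Phi> \<phi> \<longleftrightarrow>
     \<phi> \<in> borel_measurable (M \<Otimes>\<^sub>M M) \<and>
     (\<exists>f g. Linf_l2 M f \<and> Linf_l2 M g \<and> marg_eq M \<phi> (\<lambda>(s, t). l2_inner (f s) (g t))) \<and>
     (\<forall>k\<in>L2 (M \<Otimes>\<^sub>M M). op_eq M (\<Phi> (kernel_op M k)) (kernel_op M (\<lambda>p. \<phi> p * k p)))"

end

theory Submission
  imports Defs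
begin


lemma ae_eq_refl[simp]: "ae_eq M f f" by (simp add: ae_eq_def)
lemma ae_eq_sym: "ae_eq M f g \<Longrightarrow> ae_eq M g f" by (auto simp: ae_eq_def elim: AE_mp)
lemma ae_eq_trans: "ae_eq M f g \<Longrightarrow> ae_eq M g h \<Longrightarrow> ae_eq M f h"
  unfolding ae_eq_def by (auto elim: AE_mp)
lemma ae_eqI: "(\<And>x. f x = g x) \<Longrightarrow> ae_eq M f g" by (simp add: ae_eq_def)

lemma borel_measurable_cnj'[measurable (raw)]:
  "f \<in> borel_measurable M \<Longrightarrow> (\<lambda>x. cnj (f x)) \<in> borel_measurable M"
  using measurable_compose[OF _ borel_measurable_continuous_onI[of cnj]]
  by (auto intro: continuous_on_cnj continuous_on_id)

lemma sq_aux1: "(x::real) \<le> 1 + x\<^sup>2"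
proof -
  have "2*x \<le> x\<^sup>2 + 1" using sum_squares_bound[of x 1] by simp
  moreover have "0 \<le> x\<^sup>2" by simp
  ultimately show ?thesis by linarith
qed

lemma sq_aux2: "((a::real) + b)\<^sup>2 \<le> 2 * a\<^sup>2 + 2 * b\<^sup>2"
  using sum_squares_bound[of a b] power2_sum[of a b] by linarith

lemma sq_aux3: "(a::real) \<ge> 0 \<Longrightarrow> b \<ge> 0 \<Longrightarrow> a * b \<le> a\<^sup>2 + b\<^sup>2"
  using sum_squares_bound[of a b] mult_nonneg_nonneg[of a b] by linarith

context finite_measure begin

lemma L2_D: "f \<in> L2 M \<Longrightarrow> f \<in> borel_measurable M" "f \<in> L2 M \<Longrightarrow> integrable M (\<lambda>x. (cmod (f x))\<^sup>2)"
  by (auto simp: L2_def)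

lemma L2_I: "f \<in> borel_measurable M \<Longrightarrow> integrable M (\<lambda>x. (cmod (f x))\<^sup>2) \<Longrightarrow> f \<in> L2 M"
  by (auto simp: L2_def)

lemma L2_integrable: assumes "f \<in> L2 M" shows "integrable M f"
proof -
  have [measurable]: "f \<in> borel_measurable M" using assms by (rule L2_D)
  show ?thesis
  proof (rule Bochner_Integration.integrable_bound[of M "\<lambda>x. 1 + (cmod (f x))\<^sup>2"])
    show "integrable M (\<lambda>x. 1 + (cmod (f x))\<^sup>2)" using L2_D(2)[OF assms] by auto
    show "AE x in M. norm (f x) \<le> norm (1 + (cmod (f x))\<^sup>2)"
    proof (rule AE_I2)
      fix x have "cmod (f x) \<le> 1 + (cmod (f x))\<^sup>2"
        by (rule sq_aux1)
      then show "norm (f x) \<le> norm (1 + (cmod (f x))\<^sup>2)" by simp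
    qed
  qed measurable
qed

lemma L2_zero[simp]: "(\<lambda>x. 0) \<in> L2 M" by (auto simp: L2_def)

lemma L2_add: assumes "f \<in> L2 M" "g \<in> L2 M" shows "(\<lambda>x. f x + g x) \<in> L2 M"
proof -
  have [measurable]: "f \<in> borel_measurable M" "g \<in> borel_measurable M" using assms by (auto dest: L2_D)
  have "integrable M (\<lambda>x. (cmod (f x + g x))\<^sup>2)"
  proof (rule Bochner_Integration.integrable_bound[of M "\<lambda>x. 2 * (cmod (f x))\<^sup>2 + 2 * (cmod (g x))\<^sup>2"])
    show "integrable M (\<lambda>x. 2 * (cmod (f x))\<^sup>2 + 2 * (cmod (g x))\<^sup>2)"
      using L2_D(2)[OF assms(1)] L2_D(2)[OF assms(2)] by simp
    show "AE x in M. norm ((cmod (f x + g x))\<^sup>2) \<le> norm (2 * (cmod (f x))\<^sup>2 + 2 * (cmod (g x))\<^sup>2)"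
    proof (rule AE_I2)
      fix x
      have "cmod (f x + g x) \<le> cmod (f x) + cmod (g x)" by (rule norm_triangle_ineq)
      then have "(cmod (f x + g x))\<^sup>2 \<le> (cmod (f x) + cmod (g x))\<^sup>2" by (simp add: power_mono)
      also have "\<dots> \<le> 2 * (cmod (f x))\<^sup>2 + 2 * (cmod (g x))\<^sup>2"
        by (rule sq_aux2)
      finally show "norm ((cmod (f x + g x))\<^sup>2) \<le> norm (2 * (cmod (f x))\<^sup>2 + 2 * (cmod (g x))\<^sup>2)" by simp
    qed
  qed measurable
  then show ?thesis by (intro L2_I) auto
qed

lemma L2_mult_bounded: assumes "f \<in> L2 M" "b \<in> borel_measurable M" "\<And>x. cmod (b x) \<le> B"
  shows "(\<lambda>x. b x * f x) \<in> L2 M"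
proof -
  have [measurable]: "f \<in> borel_measurable M" "b \<in> borel_measurable M" using assms by (auto dest: L2_D)
  have "integrable M (\<lambda>x. (cmod (b x * f x))\<^sup>2)"
  proof (rule Bochner_Integration.integrable_bound[of M "\<lambda>x. B\<^sup>2 * (cmod (f x))\<^sup>2"])
    show "integrable M (\<lambda>x. B\<^sup>2 * (cmod (f x))\<^sup>2)" using assms by (auto dest: L2_D)
    show "AE x in M. norm ((cmod (b x * f x))\<^sup>2) \<le> norm (B\<^sup>2 * (cmod (f x))\<^sup>2)"
    proof (rule AE_I2)
      fix x
      have "cmod (b x) * cmod (f x) \<le> B * cmod (f x)" using assms(3) by (simp add: mult_right_mono)
      then have "(cmod (b x) * cmod (f x))\<^sup>2 \<le> (B * cmod (f x))\<^sup>2"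
        by (simp add: power_mono)
      then show "norm ((cmod (b x * f x))\<^sup>2) \<le> norm (B\<^sup>2 * (cmod (f x))\<^sup>2)"
        by (simp add: norm_mult power_mult_distrib)
    qed
  qed measurable
  then show ?thesis by (intro L2_I) auto
qed

lemma L2_cmult: "f \<in> L2 M \<Longrightarrow> (\<lambda>x. c * f x) \<in> L2 M"
  using L2_mult_bounded[of f "\<lambda>x. c" "cmod c"] by auto

lemma L2_minus: "f \<in> L2 M \<Longrightarrow> (\<lambda>x. - f x) \<in> L2 M"
  using L2_cmult[of f "-1"] by simp

lemma L2_diff: "f \<in> L2 M \<Longrightarrow> g \<in> L2 M \<Longrightarrow> (\<lambda>x. f x - g x) \<in> L2 M"
  using L2_add[of f "\<lambda>x. - g x"] L2_minus[of g] by simp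

lemma L2_indicator: "A \<in> sets M \<Longrightarrow> (indicator A :: _ \<Rightarrow> complex) \<in> L2 M"
  using L2_mult_bounded[of "\<lambda>x. 1" "indicator A" 1]
  by (auto simp: L2_def indicator_def)

lemma L2_mult_indicator: "A \<in> sets M \<Longrightarrow> f \<in> L2 M \<Longrightarrow> (\<lambda>x. indicator A x * f x) \<in> L2 M"
  by (rule L2_mult_bounded[where B=1]) (auto simp: indicator_def)

lemma L2_sum: "finite I \<Longrightarrow> (\<And>i. i \<in> I \<Longrightarrow> g i \<in> L2 M) \<Longrightarrow> (\<lambda>x. \<Sum>i\<in>I. g i x) \<in> L2 M"
  by (induction I rule: finite_induct) (auto intro: L2_add)

lemma l2norm_nonneg[simp]: "l2norm M f \<ge> 0" by (simp add: l2norm_def)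

lemma l2norm_sq: "(l2norm M f)\<^sup>2 = (LINT x|M. (cmod (f x))\<^sup>2)"
  by (simp add: l2norm_def)

lemma l2norm_eq0: assumes "f \<in> L2 M" shows "l2norm M f = 0 \<longleftrightarrow> (AE x in M. f x = 0)"
proof -
  have "l2norm M f = 0 \<longleftrightarrow> (LINT x|M. (cmod (f x))\<^sup>2) = 0" by (simp add: l2norm_def)
  also have "\<dots> \<longleftrightarrow> (AE x in M. (cmod (f x))\<^sup>2 = 0)"
    by (rule integral_nonneg_eq_0_iff_AE) (use assms in \<open>auto dest: L2_D\<close>)
  finally show ?thesis by simp
qed

lemma l2norm_cong: assumes "f \<in> borel_measurable M" "g \<in> borel_measurable M" "ae_eq M f g"
  shows "l2norm M f = l2norm M g"
proof -
  have "(LINT x|M. (cmod (f x))\<^sup>2) = (LINT x|M. (cmod (g x))\<^sup>2)"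
    by (rule integral_cong_AE) (use assms in \<open>auto simp: ae_eq_def elim: AE_mp\<close>)
  then show ?thesis by (simp add: l2norm_def)
qed

lemma l2norm_cmult: "l2norm M (\<lambda>x. c * f x) = cmod c * l2norm M f"
proof -
  have "(LINT x|M. (cmod (c * f x))\<^sup>2) = (cmod c)\<^sup>2 * (LINT x|M. (cmod (f x))\<^sup>2)"
    by (simp add: norm_mult power_mult_distrib)
  then show ?thesis by (simp add: l2norm_def real_sqrt_mult)
qed

lemma l2norm_zero[simp]: "l2norm M (\<lambda>x. 0) = 0" by (simp add: l2norm_def)

lemma CS_integrable: assumes "f \<in> L2 M" "g \<in> L2 M"
  shows "integrable M (\<lambda>x. cmod (f x) * cmod (g x))"
proof -
  have [measurable]: "f \<in> borel_measurable M" "g \<in> borel_measurable M" using assms by (auto dest: L2_D)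
  show ?thesis
  proof (rule Bochner_Integration.integrable_bound[of M "\<lambda>x. (cmod (f x))\<^sup>2 + (cmod (g x))\<^sup>2"])
    show "integrable M (\<lambda>x. (cmod (f x))\<^sup>2 + (cmod (g x))\<^sup>2)" using assms by (auto dest: L2_D)
    show "AE x in M. norm (cmod (f x) * cmod (g x)) \<le> norm ((cmod (f x))\<^sup>2 + (cmod (g x))\<^sup>2)"
      by (rule AE_I2) (simp add: abs_mult sq_aux3)
  qed measurable
qed

lemma CS: assumes "f \<in> L2 M" "g \<in> L2 M"
  shows "(LINT x|M. cmod (f x) * cmod (g x)) \<le> l2norm M f * l2norm M g"
proof -
  have [measurable]: "f \<in> borel_measurable M" "g \<in> borel_measurable M" using assms by (auto dest: L2_D)
  have i1: "integrable M (\<lambda>x. (cmod (f x))\<^sup>2)" "integrable M (\<lambda>x. (cmod (g x))\<^sup>2)"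
    using assms by (auto dest: L2_D)
  have i2: "integrable M (\<lambda>x. cmod (f x) * cmod (g x))" by (rule CS_integrable[OF assms])
  have "(\<integral>\<^sup>+x. ennreal (cmod (f x)) * ennreal (cmod (g x)) \<partial>M)\<^sup>2 \<le>
        (\<integral>\<^sup>+x. (ennreal (cmod (f x)))^2 \<partial>M) * (\<integral>\<^sup>+x. (ennreal (cmod (g x)))^2 \<partial>M)"
    by (rule Cauchy_Schwarz_nn_integral) auto
  moreover have "(\<integral>\<^sup>+x. ennreal (cmod (f x)) * ennreal (cmod (g x)) \<partial>M) = ennreal (LINT x|M. cmod (f x) * cmod (g x))"
    using nn_integral_eq_integral[OF i2] by (simp add: ennreal_mult)
  moreover have "(\<integral>\<^sup>+x. (ennreal (cmod (f x)))^2 \<partial>M) = ennreal (LINT x|M. (cmod (f x))\<^sup>2)"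
    using nn_integral_eq_integral[OF i1(1)] by (simp add: ennreal_power)
  moreover have "(\<integral>\<^sup>+x. (ennreal (cmod (g x)))^2 \<partial>M) = ennreal (LINT x|M. (cmod (g x))\<^sup>2)"
    using nn_integral_eq_integral[OF i1(2)] by (simp add: ennreal_power)
  ultimately have "ennreal ((LINT x|M. cmod (f x) * cmod (g x))\<^sup>2) \<le>
       ennreal ((LINT x|M. (cmod (f x))\<^sup>2) * (LINT x|M. (cmod (g x))\<^sup>2))"
    by (simp add: ennreal_power ennreal_mult'' integral_nonneg_AE)
  then have "(LINT x|M. cmod (f x) * cmod (g x))\<^sup>2 \<le> (LINT x|M. (cmod (f x))\<^sup>2) * (LINT x|M. (cmod (g x))\<^sup>2)"
    by (subst (asm) ennreal_le_iff) (auto intro!: mult_nonneg_nonneg integral_nonneg_AE)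
  also have "\<dots> = (l2norm M f * l2norm M g)\<^sup>2"
    by (simp add: l2norm_sq power_mult_distrib)
  finally show ?thesis
    by (rule power2_le_imp_le) (simp add: mult_nonneg_nonneg)
qed

lemma l2inner_integrable: assumes "f \<in> L2 M" "g \<in> L2 M" shows "integrable M (\<lambda>x. f x * cnj (g x))"
proof -
  have [measurable]: "f \<in> borel_measurable M" "g \<in> borel_measurable M" using assms by (auto dest: L2_D)
  show ?thesis
    by (rule Bochner_Integration.integrable_bound[OF CS_integrable[OF assms]]) (auto simp: norm_mult)
qed

lemma l2inner_bound: assumes "f \<in> L2 M" "g \<in> L2 M"
  shows "cmod (l2inner M f g) \<le> l2norm M f * l2norm M g"
proof -
  have "cmod (l2inner M f g) \<le> (LINT x|M. cmod (f x * cnj (g x)))"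
    unfolding l2inner_def by (rule integral_norm_bound)
  also have "\<dots> = (LINT x|M. cmod (f x) * cmod (g x))" by (simp add: norm_mult)
  also have "\<dots> \<le> l2norm M f * l2norm M g" by (rule CS[OF assms])
  finally show ?thesis .
qed

lemma l2norm_triangle: assumes "f \<in> L2 M" "g \<in> L2 M"
  shows "l2norm M (\<lambda>x. f x + g x) \<le> l2norm M f + l2norm M g"
proof -
  have [measurable]: "f \<in> borel_measurable M" "g \<in> borel_measurable M" using assms by (auto dest: L2_D)
  have "(l2norm M (\<lambda>x. f x + g x))\<^sup>2 = (LINT x|M. (cmod (f x + g x))\<^sup>2)" by (rule l2norm_sq)
  also have "\<dots> \<le> (LINT x|M. (cmod (f x))\<^sup>2 + 2 * (cmod (f x) * cmod (g x)) + (cmod (g x))\<^sup>2)"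
  proof (rule integral_mono)
    show "integrable M (\<lambda>x. (cmod (f x + g x))\<^sup>2)" using L2_add[OF assms] by (auto dest: L2_D)
    show "integrable M (\<lambda>x. (cmod (f x))\<^sup>2 + 2 * (cmod (f x) * cmod (g x)) + (cmod (g x))\<^sup>2)"
      using L2_D(2)[OF assms(1)] L2_D(2)[OF assms(2)] CS_integrable[OF assms]
      by (intro Bochner_Integration.integrable_add integrable_mult_right)
    fix x
    have "cmod (f x + g x) \<le> cmod (f x) + cmod (g x)" by (rule norm_triangle_ineq)
    then have "(cmod (f x + g x))\<^sup>2 \<le> (cmod (f x) + cmod (g x))\<^sup>2" by (simp add: power_mono)
    then show "(cmod (f x + g x))\<^sup>2 \<le> (cmod (f x))\<^sup>2 + 2 * (cmod (f x) * cmod (g x)) + (cmod (g x))\<^sup>2"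
      by (simp add: power2_sum)
  qed
  also have "\<dots> = (LINT x|M. (cmod (f x))\<^sup>2) + 2 * (LINT x|M. cmod (f x) * cmod (g x)) + (LINT x|M. (cmod (g x))\<^sup>2)"
    using assms CS_integrable[OF assms] by (auto dest!: L2_D)
  also have "\<dots> \<le> (l2norm M f)\<^sup>2 + 2 * (l2norm M f * l2norm M g) + (l2norm M g)\<^sup>2"
    using CS[OF assms] by (simp add: l2norm_sq)
  also have "\<dots> = (l2norm M f + l2norm M g)\<^sup>2" by (simp add: power2_sum)
  finally show ?thesis by (rule power2_le_imp_le) simp
qed

lemma l2norm_mult_le: assumes "f \<in> L2 M" "b \<in> borel_measurable M" "\<And>x. cmod (b x) \<le> 1"
  shows "l2norm M (\<lambda>x. b x * f x) \<le> l2norm M f"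
proof -
  have "(LINT x|M. (cmod (b x * f x))\<^sup>2) \<le> (LINT x|M. (cmod (f x))\<^sup>2)"
  proof (rule integral_mono)
    show "integrable M (\<lambda>x. (cmod (b x * f x))\<^sup>2)" using L2_mult_bounded[OF assms] by (auto dest: L2_D)
    show "integrable M (\<lambda>x. (cmod (f x))\<^sup>2)" using assms by (auto dest: L2_D)
    fix x
    have "(cmod (b x))\<^sup>2 \<le> 1" using assms(3)[of x] by (simp add: power_le_one)
    then show "(cmod (b x * f x))\<^sup>2 \<le> (cmod (f x))\<^sup>2"
      by (simp add: norm_mult power_mult_distrib mult_left_le_one_le)
  qed
  then show ?thesis by (simp add: l2norm_def)
qed

lemma l2inner_cong: assumes "f \<in> borel_measurable M" "f' \<in> borel_measurable M" "g \<in> borel_measurable M"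
   "ae_eq M f f'" shows "l2inner M f g = l2inner M f' g"
  unfolding l2inner_def
  by (rule integral_cong_AE) (use assms in \<open>auto simp: ae_eq_def elim: AE_mp\<close>)

lemma l2inner_self: "f \<in> L2 M \<Longrightarrow> l2inner M f f = complex_of_real ((l2norm M f)\<^sup>2)"
proof -
  have "l2inner M f f = (LINT x|M. complex_of_real ((cmod (f x))\<^sup>2))"
    unfolding l2inner_def by (simp only: complex_norm_square)
  also have "\<dots> = complex_of_real (LINT x|M. (cmod (f x))\<^sup>2)" by (rule integral_complex_of_real)
  finally show "l2inner M f f = complex_of_real ((l2norm M f)\<^sup>2)" by (simp add: l2norm_sq)
qed

lemma l2inner_diff_left: "f \<in> L2 M \<Longrightarrow> g \<in> L2 M \<Longrightarrow> h \<in> L2 M \<Longrightarrow>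
   l2inner M (\<lambda>x. f x - g x) h = l2inner M f h - l2inner M g h"
  unfolding l2inner_def using l2inner_integrable[of f h] l2inner_integrable[of g h]
  by (simp add: left_diff_distrib)

end


context finite_measure begin

lemma l2norm_mult_bound: assumes "f \<in> L2 M" "b \<in> borel_measurable M" "\<And>x. cmod (b x) \<le> B"
  shows "l2norm M (\<lambda>x. b x * f x) \<le> B * l2norm M f"
proof -
  have B0: "0 \<le> B" using assms(3)[of undefined] norm_ge_zero[of "b undefined"] by linarith
  have "(LINT x|M. (cmod (b x * f x))\<^sup>2) \<le> (LINT x|M. B\<^sup>2 * (cmod (f x))\<^sup>2)"
  proof (rule integral_mono)
    show "integrable M (\<lambda>x. (cmod (b x * f x))\<^sup>2)" using L2_mult_bounded[OF assms] by (auto dest: L2_D)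
    show "integrable M (\<lambda>x. B\<^sup>2 * (cmod (f x))\<^sup>2)" using L2_D(2)[OF assms(1)] by simp
    fix x
    have "(cmod (b x))\<^sup>2 \<le> B\<^sup>2" using assms(3)[of x] by (simp add: power_mono)
    then show "(cmod (b x * f x))\<^sup>2 \<le> B\<^sup>2 * (cmod (f x))\<^sup>2"
      by (simp add: norm_mult power_mult_distrib mult_right_mono)
  qed
  also have "\<dots> = (B * l2norm M f)\<^sup>2" by (simp add: l2norm_sq power_mult_distrib)
  finally have "(l2norm M (\<lambda>x. b x * f x))\<^sup>2 \<le> (B * l2norm M f)\<^sup>2" by (simp add: l2norm_sq)
  then show ?thesis by (rule power2_le_imp_le) (simp add: B0)
qed

lemma l2norm_L2_cong: "f \<in> L2 M \<Longrightarrow> g \<in> L2 M \<Longrightarrow> ae_eq M f g \<Longrightarrow> l2norm M f = l2norm M g"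
  by (rule l2norm_cong) (auto dest: L2_D)

lemma bop_L2: "bop M T \<Longrightarrow> f \<in> L2 M \<Longrightarrow> T f \<in> L2 M" by (simp add: bop_def)
lemma bop_cong: "bop M T \<Longrightarrow> f \<in> L2 M \<Longrightarrow> g \<in> L2 M \<Longrightarrow> ae_eq M f g \<Longrightarrow> ae_eq M (T f) (T g)"
  by (simp add: bop_def)
lemma bop_lin: "bop M T \<Longrightarrow> f \<in> L2 M \<Longrightarrow> g \<in> L2 M \<Longrightarrow>
   ae_eq M (T (\<lambda>x. c * f x + g x)) (\<lambda>x. c * T f x + T g x)"
  by (simp add: bop_def)

lemma bop_zero: assumes "bop M T" shows "ae_eq M (T (\<lambda>x. 0)) (\<lambda>x. 0)"
proof -
  have "ae_eq M (T (\<lambda>x. 1 * 0 + 0)) (\<lambda>x. 1 * T (\<lambda>x. 0) x + T (\<lambda>x. 0) x)"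
    using bop_lin[OF assms L2_zero L2_zero] .
  then show ?thesis by (auto simp: ae_eq_def elim: AE_mp)
qed

lemma bop_cmult: assumes "bop M T" "f \<in> L2 M" shows "ae_eq M (T (\<lambda>x. c * f x)) (\<lambda>x. c * T f x)"
proof -
  have "ae_eq M (T (\<lambda>x. c * f x + 0)) (\<lambda>x. c * T f x + T (\<lambda>x. 0) x)"
    using bop_lin[OF assms L2_zero] .
  then show ?thesis using bop_zero[OF assms(1)] by (auto simp: ae_eq_def elim: AE_mp)
qed

lemma bop_add: assumes "bop M T" "f \<in> L2 M" "g \<in> L2 M"
  shows "ae_eq M (T (\<lambda>x. f x + g x)) (\<lambda>x. T f x + T g x)"
  using bop_lin[OF assms, of 1] by simp

lemma bop_diff: assumes "bop M T" "f \<in> L2 M" "g \<in> L2 M"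
  shows "ae_eq M (T (\<lambda>x. f x - g x)) (\<lambda>x. T f x - T g x)"
proof -
  have "ae_eq M (T (\<lambda>x. (-1) * g x + f x)) (\<lambda>x. (-1) * T g x + T f x)"
    using bop_lin[OF assms(1,3,2)] .
  moreover have "(\<lambda>x. (-1) * g x + f x) = (\<lambda>x. f x - g x)" by auto
  ultimately show ?thesis by simp
qed

lemma bop_sum: assumes "bop M T" "finite I" "\<And>i. i \<in> I \<Longrightarrow> g i \<in> L2 M"
  shows "ae_eq M (T (\<lambda>x. \<Sum>i\<in>I. c i * g i x)) (\<lambda>x. \<Sum>i\<in>I. c i * T (g i) x)"
  using assms(2,3)
proof (induction I rule: finite_induct)
  case empty then show ?case using bop_zero[OF assms(1)] by simp
next
  case (insert j I)
  have L: "(\<lambda>x. \<Sum>i\<in>I. c i * g i x) \<in> L2 M"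
    by (rule L2_sum) (use insert in \<open>auto intro: L2_cmult\<close>)
  have "ae_eq M (T (\<lambda>x. c j * g j x + (\<Sum>i\<in>I. c i * g i x)))
           (\<lambda>x. c j * T (g j) x + T (\<lambda>x. \<Sum>i\<in>I. c i * g i x) x)"
    by (rule bop_lin[OF assms(1)]) (use insert L in auto)
  moreover have "ae_eq M (T (\<lambda>x. \<Sum>i\<in>I. c i * g i x)) (\<lambda>x. \<Sum>i\<in>I. c i * T (g i) x)"
    using insert by auto
  ultimately show ?case using insert by (auto simp: ae_eq_def elim: AE_mp)
qed

lemma bop_bound: "bop M T \<Longrightarrow> \<exists>C\<ge>0. \<forall>f\<in>L2 M. l2norm M (T f) \<le> C * l2norm M f"
  unfolding bop_def
  by (metis (no_types, opaque_lifting) l2norm_nonneg max.cobounded1 max.cobounded2 mult_right_mono order_trans)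

lemma opnorm_bdd: assumes "bop M T" shows "bdd_above {l2norm M (T f) | f. f \<in> L2 M \<and> l2norm M f \<le> 1}"
proof -
  obtain C where C: "C \<ge> 0" "\<forall>f\<in>L2 M. l2norm M (T f) \<le> C * l2norm M f" using bop_bound[OF assms] by auto
  show ?thesis
  proof (rule bdd_aboveI)
    fix y assume "y \<in> {l2norm M (T f) | f. f \<in> L2 M \<and> l2norm M f \<le> 1}"
    then obtain f where f: "f \<in> L2 M" "l2norm M f \<le> 1" "y = l2norm M (T f)" by auto
    have "y \<le> C * l2norm M f" using C f by auto
    also have "\<dots> \<le> C" using C f by (simp add: mult_left_le)
    finally show "y \<le> C" .
  qed
qed

lemma opnorm_upper: "bop M T \<Longrightarrow> f \<in> L2 M \<Longrightarrow> l2norm M f \<le> 1 \<Longrightarrow> l2norm M (T f) \<le> opnorm M T"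
  unfolding opnorm_def by (rule cSup_upper) (auto intro: opnorm_bdd)

lemma opnorm_nonneg: assumes "bop M T" shows "0 \<le> opnorm M T"
proof -
  have "l2norm M (T (\<lambda>x. 0)) \<le> opnorm M T" by (rule opnorm_upper) (auto simp: assms)
  then show ?thesis using l2norm_nonneg order_trans by blast
qed

lemma opnorm_le: assumes "\<And>f. f \<in> L2 M \<Longrightarrow> l2norm M f \<le> 1 \<Longrightarrow> l2norm M (T f) \<le> B"
  shows "opnorm M T \<le> B"
  unfolding opnorm_def
proof (rule cSup_least)
  show "{l2norm M (T f) |f. f \<in> L2 M \<and> l2norm M f \<le> 1} \<noteq> {}"
    by (auto intro!: exI[of _ "\<lambda>x. 0"])
qed (use assms in auto)

lemma bop_L2_zero_ae: assumes "bop M T" "f \<in> L2 M" "l2norm M f = 0" shows "l2norm M (T f) = 0"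
proof -
  have "ae_eq M f (\<lambda>x. 0)" using assms l2norm_eq0[of f] by (simp add: ae_eq_def)
  then have "ae_eq M (T f) (T (\<lambda>x. 0))" using bop_cong[OF assms(1,2) L2_zero] by simp
  then have "ae_eq M (T f) (\<lambda>x. 0)" using bop_zero[OF assms(1)] by (rule ae_eq_trans)
  then show ?thesis using l2norm_eq0[OF bop_L2[OF assms(1,2)]] by (simp add: ae_eq_def)
qed

lemma opnorm_bound: assumes "bop M T" "f \<in> L2 M" shows "l2norm M (T f) \<le> opnorm M T * l2norm M f"
proof (cases "l2norm M f = 0")
  case True then show ?thesis using bop_L2_zero_ae[OF assms] by simp
next
  case False
  let ?c = "complex_of_real (1 / l2norm M f)"
  have h: "(\<lambda>x. ?c * f x) \<in> L2 M" using assms(2) by (rule L2_cmult)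
  have cc: "cmod ?c = 1 / l2norm M f" by (simp add: norm_divide abs_of_nonneg)
  have nh: "l2norm M (\<lambda>x. ?c * f x) = 1" by (simp only: l2norm_cmult cc) (use False in simp)
  have "l2norm M (T (\<lambda>x. ?c * f x)) = l2norm M (\<lambda>x. ?c * T f x)"
    by (rule l2norm_L2_cong[OF bop_L2[OF assms(1) h] L2_cmult[OF bop_L2[OF assms]] bop_cmult[OF assms]])
  also have "\<dots> = l2norm M (T f) / l2norm M f" by (simp only: l2norm_cmult cc) simp
  finally have "l2norm M (T f) / l2norm M f \<le> opnorm M T"
    using opnorm_upper[OF assms(1) h] nh by simp
  then show ?thesis using False by (simp add: divide_le_eq order_less_le)
qed

lemma bop_zero_op: "bop M (\<lambda>f x. 0)"
  unfolding bop_def by (auto intro!: exI[of _ 0])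

lemma opnorm_zero_op: "opnorm M (\<lambda>f x. 0) = 0"
  using opnorm_le[of "\<lambda>f x. 0" 0] opnorm_nonneg[OF bop_zero_op] by simp

lemma bop_mult_comp:
  assumes T: "bop M T" and a: "a \<in> borel_measurable M" "\<And>x. cmod (a x) \<le> A"
    and b: "b \<in> borel_measurable M" "\<And>x. cmod (b x) \<le> B"
  shows "bop M (mult_op a \<circ> T \<circ> mult_op b)"
proof -
  have cmp: "(mult_op a \<circ> T \<circ> mult_op b) f = (\<lambda>x. a x * T (\<lambda>y. b y * f y) x)" for f
    by (simp add: mult_op_def)
  have bf: "f \<in> L2 M \<Longrightarrow> (\<lambda>y. b y * f y) \<in> L2 M" for f using L2_mult_bounded[OF _ b] .
  obtain C where C: "C \<ge> 0" "\<forall>f\<in>L2 M. l2norm M (T f) \<le> C * l2norm M f" using bop_bound[OF T] by auto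
  have A0: "0 \<le> A" using a(2)[of undefined] norm_ge_zero[of "a undefined"] by linarith
  have B0: "0 \<le> B" using b(2)[of undefined] norm_ge_zero[of "b undefined"] by linarith
  show ?thesis
    unfolding bop_def cmp
  proof (intro conjI ballI allI impI)
    fix f assume f: "f \<in> L2 M"
    show "(\<lambda>x. a x * T (\<lambda>y. b y * f y) x) \<in> L2 M"
      by (rule L2_mult_bounded[OF bop_L2[OF T bf[OF f]] a])
  next
    fix f g assume f: "f \<in> L2 M" and g: "g \<in> L2 M" and "ae_eq M f g"
    then have "ae_eq M (\<lambda>y. b y * f y) (\<lambda>y. b y * g y)" by (auto simp: ae_eq_def elim: AE_mp)
    then have "ae_eq M (T (\<lambda>y. b y * f y)) (T (\<lambda>y. b y * g y))" using bop_cong[OF T bf[OF f] bf[OF g]] by simp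
    then show "ae_eq M (\<lambda>x. a x * T (\<lambda>y. b y * f y) x) (\<lambda>x. a x * T (\<lambda>y. b y * g y) x)"
      by (auto simp: ae_eq_def elim: AE_mp)
  next
    fix f g c assume f: "f \<in> L2 M" and g: "g \<in> L2 M"
    have e: "(\<lambda>y. b y * (c * f y + g y)) = (\<lambda>y. c * (b y * f y) + b y * g y)"
      by (auto simp: algebra_simps)
    have "ae_eq M (T (\<lambda>y. c * (b y * f y) + b y * g y)) (\<lambda>x. c * T (\<lambda>y. b y * f y) x + T (\<lambda>y. b y * g y) x)"
      by (rule bop_lin[OF T bf[OF f] bf[OF g]])
    then show "ae_eq M (\<lambda>x. a x * T (\<lambda>y. b y * (c * f y + g y)) x)
        (\<lambda>x. c * (a x * T (\<lambda>y. b y * f y) x) + a x * T (\<lambda>y. b y * g y) x)"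
      unfolding e by (auto simp: ae_eq_def algebra_simps elim: AE_mp)
  next
    show "\<exists>C. \<forall>f\<in>L2 M. l2norm M (\<lambda>x. a x * T (\<lambda>y. b y * f y) x) \<le> C * l2norm M f"
    proof (intro exI[of _ "A * C * B"] ballI)
      fix f assume f: "f \<in> L2 M"
      have "l2norm M (\<lambda>x. a x * T (\<lambda>y. b y * f y) x) \<le> A * l2norm M (T (\<lambda>y. b y * f y))"
        by (rule l2norm_mult_bound[OF bop_L2[OF T bf[OF f]] a])
      also have "\<dots> \<le> A * (C * l2norm M (\<lambda>y. b y * f y))"
        using C bf[OF f] A0 by (simp add: mult_left_mono)
      also have "\<dots> \<le> A * (C * (B * l2norm M f))"
        using l2norm_mult_bound[OF f b] A0 C by (simp add: mult_left_mono)
      finally show "l2norm M (\<lambda>x. a x * T (\<lambda>y. b y * f y) x) \<le> A * C * B * l2norm M f"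
        by (simp add: ac_simps)
    qed
  qed
qed

lemma indicator_Linf: "A \<in> sets M \<Longrightarrow> (indicator A :: _ \<Rightarrow> complex) \<in> Linf M"
  unfolding Linf_def by (auto intro!: exI[of _ 1] simp: indicator_def)

lemma cmod_indicator_le: "cmod (indicator A x :: complex) \<le> 1"
  by (simp add: indicator_def)

lemma bop_ind_comp: "bop M T \<Longrightarrow> A \<in> sets M \<Longrightarrow> B \<in> sets M \<Longrightarrow>
   bop M (mult_op (indicator A) \<circ> T \<circ> mult_op (indicator B))"
  by (rule bop_mult_comp[where A=1 and B=1]) (auto simp: cmod_indicator_le)

lemma opnorm_ind_comp: assumes "bop M T" "A \<in> sets M" "B \<in> sets M"
  shows "opnorm M (mult_op (indicator A) \<circ> T \<circ> mult_op (indicator B)) \<le> opnorm M T"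
proof (rule opnorm_le)
  fix f assume f: "f \<in> L2 M" "l2norm M f \<le> 1"
  have bf: "(\<lambda>y. indicator B y * f y) \<in> L2 M" using L2_mult_indicator[OF assms(3) f(1)] .
  have "l2norm M ((mult_op (indicator A) \<circ> T \<circ> mult_op (indicator B)) f)
      = l2norm M (\<lambda>x. indicator A x * T (\<lambda>y. indicator B y * f y) x)" by (simp add: mult_op_def)
  also have "\<dots> \<le> 1 * l2norm M (T (\<lambda>y. indicator B y * f y))"
    by (rule l2norm_mult_bound[OF bop_L2[OF assms(1) bf]]) (use assms in \<open>auto simp: cmod_indicator_le\<close>)
  also have "\<dots> \<le> opnorm M T * l2norm M (\<lambda>y. indicator B y * f y)"
    using opnorm_bound[OF assms(1) bf] by simp
  also have "\<dots> \<le> opnorm M T * (1 * l2norm M f)"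
    by (intro mult_left_mono l2norm_mult_bound[OF f(1)] opnorm_nonneg assms)
       (use assms in \<open>auto simp: cmod_indicator_le\<close>)
  also have "\<dots> \<le> opnorm M T" using f opnorm_nonneg[OF assms(1)] by (simp add: mult_left_le)
  finally show "l2norm M ((mult_op (indicator A) \<circ> T \<circ> mult_op (indicator B)) f) \<le> opnorm M T" .
qed

lemma matnorm_1: "matnorm M 1 A = opnorm M (A 0 0)"
proof -
  have "{sqrt (\<Sum>i<1. (l2norm M (\<lambda>x. \<Sum>j<1. A i j (\<xi> j) x))\<^sup>2) | \<xi>.
       (\<forall>j<1. \<xi> j \<in> L2 M) \<and> (\<Sum>j<1. (l2norm M (\<xi> j))\<^sup>2) \<le> 1}
     = {l2norm M (A 0 0 f) | f. f \<in> L2 M \<and> l2norm M f \<le> 1}"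
  proof (intro equalityI subsetI)
    fix y assume "y \<in> {sqrt (\<Sum>i<1. (l2norm M (\<lambda>x. \<Sum>j<1. A i j (\<xi> j) x))\<^sup>2) | \<xi>.
       (\<forall>j<1. \<xi> j \<in> L2 M) \<and> (\<Sum>j<1. (l2norm M (\<xi> j))\<^sup>2) \<le> 1}"
    then obtain \<xi> where "\<xi> 0 \<in> L2 M" "(l2norm M (\<xi> 0))\<^sup>2 \<le> 1" "y = l2norm M (A 0 0 (\<xi> 0))"
      by (auto simp: lessThan_Suc)
    moreover have "l2norm M (\<xi> 0) \<le> 1" using \<open>(l2norm M (\<xi> 0))\<^sup>2 \<le> 1\<close>
      by (simp add: power_le_one_iff)
    ultimately show "y \<in> {l2norm M (A 0 0 f) | f. f \<in> L2 M \<and> l2norm M f \<le> 1}" by auto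
  next
    fix y assume "y \<in> {l2norm M (A 0 0 f) | f. f \<in> L2 M \<and> l2norm M f \<le> 1}"
    then obtain f where f: "f \<in> L2 M" "l2norm M f \<le> 1" "y = l2norm M (A 0 0 f)" by auto
    have "(l2norm M f)\<^sup>2 \<le> 1" using f by (simp add: power_le_one)
    then show "y \<in> {sqrt (\<Sum>i<1. (l2norm M (\<lambda>x. \<Sum>j<1. A i j (\<xi> j) x))\<^sup>2) | \<xi>.
       (\<forall>j<1. \<xi> j \<in> L2 M) \<and> (\<Sum>j<1. (l2norm M (\<xi> j))\<^sup>2) \<le> 1}"
      using f by (intro CollectI exI[of _ "\<lambda>j. f"]) (auto simp: lessThan_Suc)
  qed
  then show ?thesis unfolding matnorm_def opnorm_def by simp
qed

lemma NCB_bop: "NCB_D M \<Phi> \<Longrightarrow> bop M T \<Longrightarrow> bop M (\<Phi> T)" by (simp add: NCB_D_def)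

lemma NCB_opnorm: assumes "NCB_D M \<Phi>" shows "\<exists>C\<ge>0. \<forall>T. bop M T \<longrightarrow> opnorm M (\<Phi> T) \<le> C * opnorm M T"
proof -
  obtain C where C: "\<And>n A. (\<forall>i<n. \<forall>j<n. bop M (A i j)) \<Longrightarrow> matnorm M n (\<lambda>i j. \<Phi> (A i j)) \<le> C * matnorm M n A"
    using assms unfolding NCB_D_def by blast
  show ?thesis
  proof (intro exI[of _ "max C 0"] conjI allI impI)
    fix T assume T: "bop M T"
    have "matnorm M 1 (\<lambda>i j. \<Phi> T) \<le> C * matnorm M 1 (\<lambda>i j. T)"
      by (rule C) (use T in auto)
    then have "opnorm M (\<Phi> T) \<le> C * opnorm M T"
      by (simp only: matnorm_1)
    also have "\<dots> \<le> max C 0 * opnorm M T" by (intro mult_right_mono opnorm_nonneg T) simp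
    finally show "opnorm M (\<Phi> T) \<le> max C 0 * opnorm M T" .
  qed simp
qed

lemma mapnorm_bdd: assumes "NCB_D M \<Phi>" shows "bdd_above {opnorm M (\<Phi> T) | T. bop M T \<and> opnorm M T \<le> 1}"
proof -
  obtain C where C: "C \<ge> 0" "\<And>T. bop M T \<Longrightarrow> opnorm M (\<Phi> T) \<le> C * opnorm M T"
    using NCB_opnorm[OF assms] by blast
  show ?thesis
  proof (rule bdd_aboveI)
    fix y assume "y \<in> {opnorm M (\<Phi> T) | T. bop M T \<and> opnorm M T \<le> 1}"
    then obtain T where T: "bop M T" "opnorm M T \<le> 1" "y = opnorm M (\<Phi> T)" by auto
    then have "y \<le> C * opnorm M T" using C by auto
    also have "\<dots> \<le> C" using C T by (simp add: mult_left_le)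
    finally show "y \<le> C" .
  qed
qed

lemma mapnorm_upper: "NCB_D M \<Phi> \<Longrightarrow> bop M T \<Longrightarrow> opnorm M T \<le> 1 \<Longrightarrow> opnorm M (\<Phi> T) \<le> mapnorm M \<Phi>"
  unfolding mapnorm_def by (rule cSup_upper) (auto intro: mapnorm_bdd)

lemma mapnorm_le: assumes "\<And>T. bop M T \<Longrightarrow> opnorm M T \<le> 1 \<Longrightarrow> opnorm M (\<Phi> T) \<le> B"
  shows "mapnorm M \<Phi> \<le> B"
  unfolding mapnorm_def
proof (rule cSup_least)
  show "{opnorm M (\<Phi> T) |T. bop M T \<and> opnorm M T \<le> 1} \<noteq> {}"
    using bop_zero_op opnorm_zero_op by (auto intro!: exI[of _ "\<lambda>f x. 0"])
qed (use assms in auto)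

lemma mapnorm_nonneg: assumes "NCB_D M \<Phi>" shows "0 \<le> mapnorm M \<Phi>"
  using mapnorm_upper[OF assms bop_zero_op] opnorm_zero_op opnorm_nonneg[OF NCB_bop[OF assms bop_zero_op]]
  by simp

end


definition rk :: "'a measure \<Rightarrow> 'b set \<Rightarrow> ('b \<Rightarrow> 'a \<Rightarrow> complex) \<Rightarrow> ('b \<Rightarrow> 'a \<Rightarrow> complex) \<Rightarrow> 'a op" where
  "rk M V a b = (\<lambda>f s. \<Sum>v\<in>V. a v s * (LINT t|M. b v t * f t))"

definition cfib :: "'a measure \<Rightarrow> ('a \<Rightarrow> 'k) \<Rightarrow> 'k \<Rightarrow> ('a \<Rightarrow> complex) \<Rightarrow> complex" where
  "cfib M key v f = (LINT t|M. indicator (key -` {v}) t * f t) / complex_of_real (measure M (key -` {v}))"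

definition Econd :: "'a measure \<Rightarrow> ('a \<Rightarrow> 'k) \<Rightarrow> ('a \<Rightarrow> complex) \<Rightarrow> ('a \<Rightarrow> complex)" where
  "Econd M key f = (\<lambda>x. cfib M key (key x) f)"

lemma sum_fiber: "(\<Sum>v\<in>range key. g v * indicator (key -` {v}) x) = (g (key x) :: 'b::comm_ring_1)"
  if "finite (range key)"
proof -
  have "(\<Sum>v\<in>range key. g v * indicator (key -` {v}) x) = (\<Sum>v\<in>range key. if key x = v then g v else 0)"
    by (intro sum.cong) (auto simp: indicator_def)
  also have "\<dots> = g (key x)" using that by (subst sum.delta') auto
  finally show ?thesis .
qed

context finite_measure begin

lemma L2_cmult_right: assumes "f \<in> L2 M" shows "(\<lambda>x. f x * c) \<in> L2 M"
proof -
  have "(\<lambda>x. f x * c) = (\<lambda>x. c * f x)" by (auto simp: mult.commute)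
  then show ?thesis using L2_cmult[OF assms] by simp
qed

lemma L2_one: "(\<lambda>x. 1) \<in> L2 M" by (auto simp: L2_def)

lemma L2_bounded: "b \<in> borel_measurable M \<Longrightarrow> (\<And>x. cmod (b x) \<le> B) \<Longrightarrow> b \<in> L2 M"
  using L2_mult_bounded[OF L2_one, of b B] by simp

lemma l2norm_sum: assumes "finite I" "\<And>i. i \<in> I \<Longrightarrow> g i \<in> L2 M"
  shows "l2norm M (\<lambda>x. \<Sum>i\<in>I. g i x) \<le> (\<Sum>i\<in>I. l2norm M (g i))"
  using assms
proof (induction I rule: finite_induct)
  case (insert j I)
  have "l2norm M (\<lambda>x. \<Sum>i\<in>insert j I. g i x) = l2norm M (\<lambda>x. g j x + (\<Sum>i\<in>I. g i x))"
    using insert by simp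
  also have "\<dots> \<le> l2norm M (g j) + l2norm M (\<lambda>x. \<Sum>i\<in>I. g i x)"
    by (rule l2norm_triangle) (use insert in \<open>auto intro: L2_sum\<close>)
  also have "\<dots> \<le> l2norm M (g j) + (\<Sum>i\<in>I. l2norm M (g i))" using insert by auto
  finally show ?case using insert by simp
qed simp

lemma integrable_L2_mult: "f \<in> L2 M \<Longrightarrow> b \<in> borel_measurable M \<Longrightarrow> (\<And>x. cmod (b x) \<le> B) \<Longrightarrow>
   integrable M (\<lambda>t. b t * f t)"
  using L2_integrable L2_mult_bounded by blast

lemma abs_int_bound: assumes "f \<in> L2 M" "b \<in> borel_measurable M" "\<And>x. cmod (b x) \<le> B"
  shows "cmod (LINT t|M. b t * f t) \<le> l2norm M b * l2norm M f"
proof -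
  have "cmod (LINT t|M. b t * f t) \<le> (LINT t|M. cmod (b t * f t))" by (rule integral_norm_bound)
  also have "\<dots> = (LINT t|M. cmod (b t) * cmod (f t))" by (simp add: norm_mult)
  also have "\<dots> \<le> l2norm M b * l2norm M f" by (rule CS[OF L2_bounded[OF assms(2,3)] assms(1)])
  finally show ?thesis .
qed

lemma rk_bop:
  assumes V: "finite V" and a: "\<And>v. v \<in> V \<Longrightarrow> a v \<in> L2 M"
    and b: "\<And>v. v \<in> V \<Longrightarrow> b v \<in> borel_measurable M" "\<And>v t. v \<in> V \<Longrightarrow> cmod (b v t) \<le> B"
  shows "bop M (rk M V a b)"
  unfolding bop_def
proof (intro conjI ballI allI impI)
  fix f assume f: "f \<in> L2 M"
  show "rk M V a b f \<in> L2 M" unfolding rk_def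
    by (rule L2_sum[OF V]) (rule L2_cmult_right[OF a])
next
  fix f g assume f: "f \<in> L2 M" and g: "g \<in> L2 M" and fg: "ae_eq M f g"
  have "(LINT t|M. b v t * f t) = (LINT t|M. b v t * g t)" if "v \<in> V" for v
    by (rule integral_cong_AE)
      (use f g fg b that borel_measurable_integrable[OF integrable_L2_mult[OF f b(1) b(2)]]
        borel_measurable_integrable[OF integrable_L2_mult[OF g b(1) b(2)]] in \<open>auto simp: ae_eq_def elim: AE_mp\<close>)
  then show "ae_eq M (rk M V a b f) (rk M V a b g)"
    unfolding rk_def by (intro ae_eqI) (auto intro!: sum.cong)
next
  fix f g c assume f: "f \<in> L2 M" and g: "g \<in> L2 M"
  have "(LINT t|M. b v t * (c * f t + g t)) = c * (LINT t|M. b v t * f t) + (LINT t|M. b v t * g t)"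
    if "v \<in> V" for v
  proof -
    have i1: "integrable M (\<lambda>t. b v t * f t)" by (rule integrable_L2_mult[OF f b(1)[OF that] b(2)[OF that]])
    have i2: "integrable M (\<lambda>t. b v t * g t)" by (rule integrable_L2_mult[OF g b(1)[OF that] b(2)[OF that]])
    have "(LINT t|M. b v t * (c * f t + g t)) = (LINT t|M. c * (b v t * f t) + b v t * g t)"
      by (simp add: algebra_simps)
    also have "\<dots> = (LINT t|M. c * (b v t * f t)) + (LINT t|M. b v t * g t)"
      using i1 i2 by (intro Bochner_Integration.integral_add) auto
    finally show ?thesis by simp
  qed
  then show "ae_eq M (rk M V a b (\<lambda>x. c * f x + g x)) (\<lambda>x. c * rk M V a b f x + rk M V a b g x)"
    unfolding rk_def by (intro ae_eqI) (auto simp: algebra_simps sum_distrib_left sum.distrib intro!: sum.cong)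
next
  show "\<exists>C. \<forall>f\<in>L2 M. l2norm M (rk M V a b f) \<le> C * l2norm M f"
  proof (intro exI[of _ "\<Sum>v\<in>V. l2norm M (a v) * l2norm M (b v)"] ballI)
    fix f assume f: "f \<in> L2 M"
    have "l2norm M (rk M V a b f) \<le> (\<Sum>v\<in>V. l2norm M (\<lambda>s. (LINT t|M. b v t * f t) * a v s))"
      unfolding rk_def
      by (subst mult.commute, rule l2norm_sum[OF V]) (rule L2_cmult[OF a])
    also have "\<dots> = (\<Sum>v\<in>V. cmod (LINT t|M. b v t * f t) * l2norm M (a v))"
      by (simp add: l2norm_cmult)
    also have "\<dots> \<le> (\<Sum>v\<in>V. (l2norm M (b v) * l2norm M f) * l2norm M (a v))"
      by (intro sum_mono mult_right_mono abs_int_bound[OF f b(1) b(2)]) auto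
    also have "\<dots> = (\<Sum>v\<in>V. l2norm M (a v) * l2norm M (b v)) * l2norm M f"
      by (simp add: sum_distrib_right sum_distrib_left ac_simps)
    finally show "l2norm M (rk M V a b f) \<le> (\<Sum>v\<in>V. l2norm M (a v) * l2norm M (b v)) * l2norm M f" .
  qed
qed

lemma rk_kernel:
  assumes V: "finite V"
    and b: "\<And>v. v \<in> V \<Longrightarrow> b v \<in> borel_measurable M" "\<And>v t. v \<in> V \<Longrightarrow> cmod (b v t) \<le> B"
    and f: "f \<in> L2 M"
  shows "kernel_op M (\<lambda>p. \<Sum>v\<in>V. a v (fst p) * b v (snd p)) f = rk M V a b f"
proof
  fix s
  have "(LINT t|M. (\<Sum>v\<in>V. a v s * b v t) * f t) = (LINT t|M. (\<Sum>v\<in>V. a v s * (b v t * f t)))"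
    by (simp add: sum_distrib_right mult.assoc)
  also have "\<dots> = (\<Sum>v\<in>V. (LINT t|M. a v s * (b v t * f t)))"
    by (rule Bochner_Integration.integral_sum) (use integrable_L2_mult[OF f b(1) b(2)] in auto)
  also have "\<dots> = (\<Sum>v\<in>V. a v s * (LINT t|M. b v t * f t))" by simp
  finally show "kernel_op M (\<lambda>p. \<Sum>v\<in>V. a v (fst p) * b v (snd p)) f s = rk M V a b f s"
    by (simp add: kernel_op_def rk_def)
qed

end


context finite_measure begin

lemma emeasure_less_top: "emeasure M A < top"
  using emeasure_finite[of A] top.not_eq_extremum by blast

lemma integrable_fst_fun:
  fixes g :: "'a \<Rightarrow> real"
  assumes g: "integrable M g" and nn: "\<And>x. 0 \<le> g x"
  shows "integrable (M \<Otimes>\<^sub>M M) (\<lambda>p. g (fst p))"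
proof -
  have [measurable]: "g \<in> borel_measurable M" using g by auto
  have "(\<integral>\<^sup>+p. ennreal (g (fst p)) \<partial>(M \<Otimes>\<^sub>M M)) = (\<integral>\<^sup>+x. \<integral>\<^sup>+y. ennreal (g (fst (x, y))) \<partial>M \<partial>M)"
    by (rule nn_integral_fst[symmetric]) measurable
  also have "\<dots> = (\<integral>\<^sup>+x. ennreal (g x) * emeasure M (space M) \<partial>M)" by simp
  also have "\<dots> = (\<integral>\<^sup>+x. ennreal (g x) \<partial>M) * emeasure M (space M)"
    by (rule nn_integral_multc) measurable
  also have "\<dots> < \<infinity>"
    using g nn emeasure_less_top[of "space M"] by (auto simp: integrable_iff_bounded ennreal_mult_less_top)
  finally have fin: "(\<integral>\<^sup>+p. ennreal (g (fst p)) \<partial>(M \<Otimes>\<^sub>M M)) < \<infinity>" .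
  show ?thesis
    by (rule integrableI_bounded) (use fin nn in auto)
qed

lemma rk_kernel_L2:
  assumes V: "finite V" and a: "\<And>v. v \<in> V \<Longrightarrow> a v \<in> L2 M"
    and b: "\<And>v. v \<in> V \<Longrightarrow> b v \<in> borel_measurable M" "\<And>v t. v \<in> V \<Longrightarrow> cmod (b v t) \<le> B"
  shows "(\<lambda>p. \<Sum>v\<in>V. a v (fst p) * b v (snd p)) \<in> L2 (M \<Otimes>\<^sub>M M)"
proof -
  define H where "H s = (\<Sum>v\<in>V. B * cmod (a v s))" for s
  have Hnn: "0 \<le> H s" for s
  proof (cases "V = {}")
    case True then show ?thesis by (simp add: H_def)
  next
    case False
    then obtain v where v: "v \<in> V" by auto
    have "0 \<le> B" using b(2)[OF v, of undefined] norm_ge_zero[of "b v undefined"] by linarith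
    then show ?thesis unfolding H_def by (intro sum_nonneg mult_nonneg_nonneg) auto
  qed
  have HL2: "(\<lambda>s. complex_of_real (H s)) \<in> L2 M"
  proof -
    have "(\<lambda>s. \<Sum>v\<in>V. complex_of_real B * complex_of_real (cmod (a v s))) \<in> L2 M"
    proof (rule L2_sum[OF V], rule L2_cmult)
      fix v assume "v \<in> V"
      with a have [measurable]: "a v \<in> borel_measurable M" and "integrable M (\<lambda>x. (cmod (a v x))\<^sup>2)"
        by (auto dest: L2_D)
      then show "(\<lambda>x. complex_of_real (cmod (a v x))) \<in> L2 M" by (intro L2_I) auto
    qed
    then show ?thesis by (simp add: H_def)
  qed
  have meas: "(\<lambda>p. \<Sum>v\<in>V. a v (fst p) * b v (snd p)) \<in> borel_measurable (M \<Otimes>\<^sub>M M)"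
  proof (rule borel_measurable_sum)
    fix v assume v: "v \<in> V"
    note [measurable] = L2_D(1)[OF a[OF v]] b(1)[OF v]
    show "(\<lambda>p. a v (fst p) * b v (snd p)) \<in> borel_measurable (M \<Otimes>\<^sub>M M)" by measurable
  qed
  have bnd: "cmod (\<Sum>v\<in>V. a v s * b v t) \<le> H s" for s t
  proof -
    have "cmod (\<Sum>v\<in>V. a v s * b v t) \<le> (\<Sum>v\<in>V. cmod (a v s * b v t))" by (rule norm_sum)
    also have "\<dots> \<le> H s" unfolding H_def
    proof (intro sum_mono)
      fix v assume v: "v \<in> V"
      have "cmod (a v s) * cmod (b v t) \<le> cmod (a v s) * B" by (rule mult_left_mono[OF b(2)[OF v]]) simp
      then show "cmod (a v s * b v t) \<le> B * cmod (a v s)" by (simp add: norm_mult mult.commute)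
    qed
    finally show ?thesis .
  qed
  have int: "integrable (M \<Otimes>\<^sub>M M) (\<lambda>p. (H (fst p))\<^sup>2)"
    using integrable_fst_fun[of "\<lambda>s. (H s)\<^sup>2"] L2_D(2)[OF HL2] Hnn by simp
  have "integrable (M \<Otimes>\<^sub>M M) (\<lambda>p. (cmod (\<Sum>v\<in>V. a v (fst p) * b v (snd p)))\<^sup>2)"
  proof (rule Bochner_Integration.integrable_bound[OF int])
    show "(\<lambda>p. (cmod (\<Sum>v\<in>V. a v (fst p) * b v (snd p)))\<^sup>2) \<in> borel_measurable (M \<Otimes>\<^sub>M M)"
      using meas by measurable
    show "AE p in M \<Otimes>\<^sub>M M. norm ((cmod (\<Sum>v\<in>V. a v (fst p) * b v (snd p)))\<^sup>2) \<le> norm ((H (fst p))\<^sup>2)"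
      by (rule AE_I2) (use bnd Hnn in \<open>auto intro: power_mono\<close>)
  qed
  then show ?thesis using meas unfolding L2_def by auto
qed

end

locale keyctx = finite_measure M for M :: "'a measure" and key :: "'a \<Rightarrow> 'k" +
  assumes fin_key: "finite (range key)" and fib_sets: "\<And>v. key -` {v} \<in> sets M"
begin

abbreviation "F v \<equiv> key -` {v}"

lemma Econd_sum: "Econd M key f = (\<lambda>x. \<Sum>v\<in>range key. cfib M key v f * indicator (F v) x)"
  unfolding Econd_def using sum_fiber[OF fin_key, of "\<lambda>v. cfib M key v f"] by simp

lemma Econd_L2: "Econd M key f \<in> L2 M"
  unfolding Econd_sum
  by (rule L2_sum[OF fin_key]) (rule L2_cmult[OF L2_indicator[OF fib_sets]])

lemma int_ind: "f \<in> L2 M \<Longrightarrow> integrable M (\<lambda>t. indicator (F v) t * f t)"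
  using integrable_L2_mult[of f "indicator (F v)" 1] borel_measurable_indicator[OF fib_sets[of v]]
  by (auto simp: cmod_indicator_le)

lemma Econd_diff: assumes "f \<in> L2 M" "g \<in> L2 M"
  shows "Econd M key (\<lambda>x. f x - g x) = (\<lambda>x. Econd M key f x - Econd M key g x)"
proof -
  have "cfib M key v (\<lambda>x. f x - g x) = cfib M key v f - cfib M key v g" for v
  proof -
    have "(LINT t|M. indicator (F v) t * (f t - g t)) = (LINT t|M. indicator (F v) t * f t - indicator (F v) t * g t)"
      by (simp add: algebra_simps)
    also have "\<dots> = (LINT t|M. indicator (F v) t * f t) - (LINT t|M. indicator (F v) t * g t)"
      by (rule Bochner_Integration.integral_diff) (use int_ind assms in auto)
    finally show ?thesis unfolding cfib_def by (simp add: diff_divide_distrib)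
  qed
  then show ?thesis unfolding Econd_def by auto
qed

lemma F_space[simp]: "F v \<inter> space M = F v"
  using fib_sets[of v] by (simp add: sets.Int_space_eq2)

lemma measure_F_int: "(LINT t|M. (indicator (F v) t :: real)) = measure M (F v)"
  using fib_sets[of v] by (simp add: sets.Int_space_eq2)

lemma cfib_bound: assumes f: "f \<in> L2 M"
  shows "(cmod (cfib M key v f))\<^sup>2 * measure M (F v) \<le> (LINT t|M. indicator (F v) t * (cmod (f t))\<^sup>2)"
proof (cases "measure M (F v) = 0")
  case True then show ?thesis
    by (auto intro!: integral_nonneg_AE simp: indicator_def)
next
  case False
  let ?m = "measure M (F v)"
  have mpos: "?m > 0" using False by (simp add: order_less_le)
  have L1: "(indicator (F v) :: _ \<Rightarrow> complex) \<in> L2 M" by (rule L2_indicator[OF fib_sets])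
  have L2': "(\<lambda>t. indicator (F v) t * f t) \<in> L2 M" by (rule L2_mult_indicator[OF fib_sets f])
  have n1: "(l2norm M (indicator (F v) :: _ \<Rightarrow> complex))\<^sup>2 = ?m"
  proof -
    have "(\<lambda>t. (cmod (indicator (F v) t :: complex))\<^sup>2) = (\<lambda>t. indicator (F v) t)"
      by (auto simp: indicator_def)
    then show ?thesis by (simp add: l2norm_sq measure_F_int)
  qed
  have n2: "(l2norm M (\<lambda>t. indicator (F v) t * f t))\<^sup>2 = (LINT t|M. indicator (F v) t * (cmod (f t))\<^sup>2)"
  proof -
    have "(\<lambda>t. (cmod (indicator (F v) t * f t))\<^sup>2) = (\<lambda>t. indicator (F v) t * (cmod (f t))\<^sup>2)"
      by (auto simp: indicator_def)
    then show ?thesis by (simp add: l2norm_sq)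
  qed
  have "cmod (LINT t|M. indicator (F v) t * f t) \<le> (LINT t|M. cmod (indicator (F v) t * f t))"
    by (rule integral_norm_bound)
  also have "\<dots> = (LINT t|M. cmod (indicator (F v) t :: complex) * cmod (indicator (F v) t * f t))"
    by (intro Bochner_Integration.integral_cong) (auto simp: indicator_def)
  also have "\<dots> \<le> l2norm M (indicator (F v) :: _ \<Rightarrow> complex) * l2norm M (\<lambda>t. indicator (F v) t * f t)"
    by (rule CS[OF L1 L2'])
  finally have c: "cmod (LINT t|M. indicator (F v) t * f t) \<le> l2norm M (indicator (F v) :: _ \<Rightarrow> complex) * l2norm M (\<lambda>t. indicator (F v) t * f t)" .
  have "(cmod (LINT t|M. indicator (F v) t * f t))\<^sup>2 \<le> (l2norm M (indicator (F v) :: _ \<Rightarrow> complex) * l2norm M (\<lambda>t. indicator (F v) t * f t))\<^sup>2"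
    by (rule power_mono[OF c]) simp
  also have "\<dots> = ?m * (LINT t|M. indicator (F v) t * (cmod (f t))\<^sup>2)"
    by (simp only: power_mult_distrib n1 n2)
  finally have "(cmod (LINT t|M. indicator (F v) t * f t))\<^sup>2 \<le> ?m * (LINT t|M. indicator (F v) t * (cmod (f t))\<^sup>2)" .
  moreover have "(cmod (cfib M key v f))\<^sup>2 * ?m = (cmod (LINT t|M. indicator (F v) t * f t))\<^sup>2 / ?m"
    unfolding cfib_def using mpos by (simp add: norm_divide power_divide power2_eq_square)
  ultimately show ?thesis using mpos by (simp add: divide_le_eq mult.commute)
qed

lemma Econd_norm: assumes f: "f \<in> L2 M" shows "l2norm M (Econd M key f) \<le> l2norm M f"
proof -
  have [measurable]: "f \<in> borel_measurable M" using f by (rule L2_D)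
  have e1: "(\<lambda>x. (cmod (Econd M key f x))\<^sup>2) = (\<lambda>x. \<Sum>v\<in>range key. (cmod (cfib M key v f))\<^sup>2 * indicator (F v) x)"
    unfolding Econd_def using sum_fiber[OF fin_key, of "\<lambda>v. (cmod (cfib M key v f))\<^sup>2"] by simp
  have "(LINT x|M. (cmod (Econd M key f x))\<^sup>2) = (\<Sum>v\<in>range key. (LINT x|M. (cmod (cfib M key v f))\<^sup>2 * indicator (F v) x))"
    unfolding e1 by (rule Bochner_Integration.integral_sum) (auto intro!: integrable_real_indicator fib_sets emeasure_less_top)
  also have "\<dots> = (\<Sum>v\<in>range key. (cmod (cfib M key v f))\<^sup>2 * measure M (F v))"
    by (simp add: measure_F_int)
  also have "\<dots> \<le> (\<Sum>v\<in>range key. (LINT t|M. indicator (F v) t * (cmod (f t))\<^sup>2))"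
    by (intro sum_mono cfib_bound f)
  also have "\<dots> = (LINT t|M. (\<Sum>v\<in>range key. indicator (F v) t * (cmod (f t))\<^sup>2))"
  proof (rule Bochner_Integration.integral_sum[symmetric])
    fix v
    show "integrable M (\<lambda>t. indicator (F v) t * (cmod (f t))\<^sup>2)"
      using integrable_mult_indicator[OF fib_sets L2_D(2)[OF f], of v] by simp
  qed
  also have "\<dots> = (LINT t|M. (\<Sum>v\<in>range key. (cmod (f t))\<^sup>2 * indicator (F v) t))"
    by (simp only: mult.commute)
  also have "\<dots> = (LINT t|M. (cmod (f t))\<^sup>2)"
    using sum_fiber[OF fin_key, of "\<lambda>v. (cmod (f _))\<^sup>2"] by simp
  finally show ?thesis by (simp add: l2norm_def)
qed

end


lemma complex_indicator: "(indicator A x :: complex) = complex_of_real (indicator A x)"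
  by (simp add: indicator_def)

context finite_measure begin

lemma bop_eqL2: assumes "bop M T" "\<And>f. f \<in> L2 M \<Longrightarrow> S f = T f" shows "bop M S"
proof -
  have "(\<lambda>x. c * f x + g x) \<in> L2 M" if "f \<in> L2 M" "g \<in> L2 M" for f g c
    using that by (intro L2_add L2_cmult)
  then show ?thesis using assms unfolding bop_def by simp
qed

end

context keyctx begin

lemma Econd_fix: assumes g: "g \<in> L2 M" and gh: "\<And>x. g x = h (key x)"
  shows "ae_eq M (Econd M key g) g"
proof -
  have c: "cfib M key v g = h v" if "measure M (F v) \<noteq> 0" for v
  proof -
    have "(LINT t|M. indicator (F v) t * g t) = (LINT t|M. h v * complex_of_real (indicator (F v) t))"
      by (intro Bochner_Integration.integral_cong) (auto simp: gh indicator_def)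
    also have "\<dots> = h v * complex_of_real (measure M (F v))" by (simp add: measure_F_int)
    finally show ?thesis using that unfolding cfib_def by simp
  qed
  have "AE x in M. \<forall>v\<in>range key. measure M (F v) = 0 \<longrightarrow> x \<notin> F v"
  proof (rule AE_finite_allI[OF fin_key])
    fix v
    show "AE x in M. measure M (F v) = 0 \<longrightarrow> x \<notin> F v"
    proof (cases "measure M (F v) = 0")
      case True
      then have "F v \<in> null_sets M" using fib_sets[of v]
        by (simp add: null_sets_def emeasure_eq_measure)
      then show ?thesis by (rule AE_mp[OF AE_not_in]) (auto intro!: AE_I2)
    qed simp
  qed
  then show ?thesis unfolding ae_eq_def
  proof (rule AE_mp, intro AE_I2 impI)
    fix x assume "\<forall>v\<in>range key. measure M (F v) = 0 \<longrightarrow> x \<notin> F v"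
    then have "measure M (F (key x)) \<noteq> 0" by auto
    then show "Econd M key g x = g x" by (simp add: Econd_def c gh)
  qed
qed

definition "Bk = (\<Sum>w\<in>range key. 1 / measure M (F w))"

lemma bk_bound: "cmod (indicator (F v) t / complex_of_real (measure M (F v))) \<le> Bk"
proof -
  have "cmod (indicator (F v) t / complex_of_real (measure M (F v))) \<le> 1 / measure M (F v)"
    by (auto simp: indicator_def norm_divide)
  also have "\<dots> \<le> Bk"
  proof (cases "v \<in> range key")
    case True then show ?thesis unfolding Bk_def by (intro member_le_sum fin_key) auto
  next
    case False then have "F v = {}" by auto
    then show ?thesis unfolding Bk_def by (auto intro!: sum_nonneg)
  qed
  finally show ?thesis .
qed

abbreviation "kb v t \<equiv> indicator (F v) t / complex_of_real (measure M (F v))"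

lemma kb_meas: "(\<lambda>t. kb v t) \<in> borel_measurable M"
  using borel_measurable_indicator[OF fib_sets[of v]] by measurable

lemma Econd_rk: assumes T: "bop M T" and f: "f \<in> L2 M"
  shows "ae_eq M (T (Econd M key f)) (rk M (range key) (\<lambda>v. T (indicator (F v))) kb f)"
proof -
  have "ae_eq M (T (\<lambda>x. \<Sum>v\<in>range key. cfib M key v f * indicator (F v) x))
     (\<lambda>x. \<Sum>v\<in>range key. cfib M key v f * T (indicator (F v)) x)"
    by (rule bop_sum[OF T fin_key]) (rule L2_indicator[OF fib_sets])
  moreover have "(LINT t|M. kb v t * f t) = cfib M key v f" for v
  proof -
    have "(LINT t|M. kb v t * f t) = (LINT t|M. (indicator (F v) t * f t) / complex_of_real (measure M (F v)))"
      by simp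
    also have "\<dots> = cfib M key v f" unfolding cfib_def by (rule integral_divide_zero)
    finally show ?thesis .
  qed
  ultimately show ?thesis unfolding Econd_sum rk_def by (simp add: mult.commute)
qed

definition "kk T = (\<lambda>p. \<Sum>v\<in>range key. T (indicator (F v)) (fst p) * kb v (snd p))"

lemma kk_props: assumes T: "bop M T"
  shows "kk T \<in> L2 (M \<Otimes>\<^sub>M M)" and "bop M (kernel_op M (kk T))"
    and "\<And>f. f \<in> L2 M \<Longrightarrow> ae_eq M (kernel_op M (kk T) f) (T (Econd M key f))"
proof -
  have a: "T (indicator (F v)) \<in> L2 M" for v by (rule bop_L2[OF T L2_indicator[OF fib_sets]])
  show "kk T \<in> L2 (M \<Otimes>\<^sub>M M)" unfolding kk_def
    by (rule rk_kernel_L2[OF fin_key a kb_meas bk_bound])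
  have eq: "kernel_op M (kk T) f = rk M (range key) (\<lambda>v. T (indicator (F v))) kb f" if "f \<in> L2 M" for f
    unfolding kk_def by (rule rk_kernel[OF fin_key kb_meas bk_bound that])
  show "bop M (kernel_op M (kk T))"
    by (rule bop_eqL2[OF rk_bop[OF fin_key a kb_meas bk_bound] eq])
  fix f assume f: "f \<in> L2 M"
  show "ae_eq M (kernel_op M (kk T) f) (T (Econd M key f))"
    unfolding eq[OF f] by (rule ae_eq_sym[OF Econd_rk[OF T f]])
qed

end


context keyctx begin

lemma l2norm_minus_commute: "l2norm M (\<lambda>x. g x - f x) = l2norm M (\<lambda>x. f x - g x)"
  by (simp add: l2norm_def norm_minus_commute)

lemma Econd_approx: assumes f: "f \<in> L2 M" and g: "g \<in> L2 M" and hfix: "ae_eq M (Econd M key g) g"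
  shows "l2norm M (\<lambda>x. Econd M key f x - f x) \<le> 2 * l2norm M (\<lambda>x. f x - g x)"
proof -
  have fg: "(\<lambda>x. f x - g x) \<in> L2 M" using f g by (rule L2_diff)
  have gf: "(\<lambda>x. g x - f x) \<in> L2 M" using g f by (rule L2_diff)
  have E1: "Econd M key (\<lambda>x. f x - g x) \<in> L2 M" by (rule Econd_L2)
  have ae: "ae_eq M (\<lambda>x. Econd M key f x - f x) (\<lambda>x. Econd M key (\<lambda>x. f x - g x) x + (g x - f x))"
    using hfix unfolding Econd_diff[OF f g] ae_eq_def by (rule AE_mp) (auto intro!: AE_I2)
  have "l2norm M (\<lambda>x. Econd M key f x - f x) = l2norm M (\<lambda>x. Econd M key (\<lambda>x. f x - g x) x + (g x - f x))"
    by (rule l2norm_L2_cong[OF L2_diff[OF Econd_L2 f] L2_add[OF E1 gf] ae])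
  also have "\<dots> \<le> l2norm M (Econd M key (\<lambda>x. f x - g x)) + l2norm M (\<lambda>x. g x - f x)"
    by (rule l2norm_triangle[OF E1 gf])
  also have "\<dots> \<le> l2norm M (\<lambda>x. f x - g x) + l2norm M (\<lambda>x. f x - g x)"
    using Econd_norm[OF fg] l2norm_minus_commute[of g f] by simp
  finally show ?thesis by simp
qed

end

context finite_measure begin

lemma simple_approx_L2:
  assumes u: "u \<in> L2 M" and s: "\<And>k. simple_function M (s k)" and lim: "\<And>x. (\<lambda>k. s k x) \<longlonglongrightarrow> u x"
    and bnd: "\<And>k x. cmod (s k x) \<le> 2 * cmod (u x)"
  shows "\<And>k. s k \<in> L2 M" and "(\<lambda>k. l2norm M (\<lambda>x. s k x - u x)) \<longlonglongrightarrow> 0"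
proof -
  have [measurable]: "u \<in> borel_measurable M" using u by (rule L2_D)
  have sm[measurable]: "s k \<in> borel_measurable M" for k using s by (rule borel_measurable_simple_function)
  show sL: "s k \<in> L2 M" for k
  proof (rule L2_I[OF sm])
    show "integrable M (\<lambda>x. (cmod (s k x))\<^sup>2)"
    proof (rule Bochner_Integration.integrable_bound[of M "\<lambda>x. 4 * (cmod (u x))\<^sup>2"])
      show "integrable M (\<lambda>x. 4 * (cmod (u x))\<^sup>2)" using L2_D(2)[OF u] by simp
      show "AE x in M. norm ((cmod (s k x))\<^sup>2) \<le> norm (4 * (cmod (u x))\<^sup>2)"
      proof (rule AE_I2)
        fix x
        have "(cmod (s k x))\<^sup>2 \<le> (2 * cmod (u x))\<^sup>2" by (rule power_mono[OF bnd]) simp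
        then show "norm ((cmod (s k x))\<^sup>2) \<le> norm (4 * (cmod (u x))\<^sup>2)" by (simp add: power_mult_distrib)
      qed
    qed measurable
  qed
  have "(\<lambda>k. LINT x|M. (cmod (s k x - u x))\<^sup>2) \<longlonglongrightarrow> (LINT x|M. 0)"
  proof (rule integral_dominated_convergence[where w="\<lambda>x. 9 * (cmod (u x))\<^sup>2"])
    show "integrable M (\<lambda>x. 9 * (cmod (u x))\<^sup>2)" using L2_D(2)[OF u] by simp
    show "AE x in M. (\<lambda>k. (cmod (s k x - u x))\<^sup>2) \<longlonglongrightarrow> 0"
    proof (rule AE_I2)
      fix x
      have "(\<lambda>k. s k x - u x) \<longlonglongrightarrow> u x - u x" by (intro tendsto_diff lim tendsto_const)
      then have "(\<lambda>k. cmod (s k x - u x)) \<longlonglongrightarrow> 0" using tendsto_norm by fastforce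
      then show "(\<lambda>k. (cmod (s k x - u x))\<^sup>2) \<longlonglongrightarrow> 0" using tendsto_power[of _ 0 sequentially 2] by fastforce
    qed
    fix k
    show "AE x in M. norm ((cmod (s k x - u x))\<^sup>2) \<le> 9 * (cmod (u x))\<^sup>2"
    proof (rule AE_I2)
      fix x
      have "cmod (s k x - u x) \<le> cmod (s k x) + cmod (u x)" by (rule norm_triangle_ineq4)
      also have "\<dots> \<le> 3 * cmod (u x)" using bnd[of k x] by simp
      finally have "(cmod (s k x - u x))\<^sup>2 \<le> (3 * cmod (u x))\<^sup>2" by (rule power_mono) simp
      then show "norm ((cmod (s k x - u x))\<^sup>2) \<le> 9 * (cmod (u x))\<^sup>2" by (simp add: power_mult_distrib)
    qed
  qed measurable
  then have "(\<lambda>k. sqrt (LINT x|M. (cmod (s k x - u x))\<^sup>2)) \<longlonglongrightarrow> sqrt 0"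
    by (intro tendsto_real_sqrt) simp
  then show "(\<lambda>k. l2norm M (\<lambda>x. s k x - u x)) \<longlonglongrightarrow> 0" by (simp add: l2norm_def)
qed

lemma approx_keys:
  fixes u :: "nat \<Rightarrow> 'a \<Rightarrow> complex"
  assumes sp: "space M = UNIV" and u: "\<And>n. u n \<in> L2 M"
  shows "\<exists>key :: nat \<Rightarrow> 'a \<Rightarrow> (nat \<times> nat \<Rightarrow> complex). (\<forall>m. keyctx M (key m)) \<and>
     (\<forall>n. (\<lambda>m. l2norm M (\<lambda>x. Econd M (key m) (u n) x - u n x)) \<longlonglongrightarrow> 0)"
proof -
  have "\<forall>n. \<exists>F. (\<forall>i. simple_function M (F i)) \<and> (\<forall>x\<in>space M. (\<lambda>i. F i x) \<longlonglongrightarrow> u n x) \<and>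
    (\<forall>i. \<forall>x\<in>space M. dist (F i x) 0 \<le> 2 * dist (u n x) 0)"
    using borel_measurable_implies_sequence_metric L2_D(1)[OF u] by blast
  from choice[OF this] obtain s where S: "\<forall>n. (\<forall>i. simple_function M (s n i)) \<and> (\<forall>x\<in>space M. (\<lambda>i. s n i x) \<longlonglongrightarrow> u n x) \<and>
    (\<forall>i. \<forall>x\<in>space M. dist (s n i x) 0 \<le> 2 * dist (u n x) 0)" by blast
  have s: "\<And>n i. simple_function M (s n i)"
    "\<And>n x. (\<lambda>i. s n i x) \<longlonglongrightarrow> u n x" "\<And>n i x. cmod (s n i x) \<le> 2 * cmod (u n x)"
    using S sp by auto
  have sL: "s n k \<in> L2 M" for n k using simple_approx_L2(1)[OF u[of n] s(1)[of n] s(2)[of n] s(3)[of n]] .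
  have sconv: "(\<lambda>k. l2norm M (\<lambda>x. s n k x - u n x)) \<longlonglongrightarrow> 0" for n
    using simple_approx_L2(2)[OF u[of n] s(1)[of n] s(2)[of n] s(3)[of n]] .
  define key :: "nat \<Rightarrow> 'a \<Rightarrow> (nat \<times> nat \<Rightarrow> complex)" where
    "key m x = (\<lambda>p. if p \<in> {..m} \<times> {..m} then s (fst p) (snd p) x else 0)" for m x
  have kc: "keyctx M (key m)" for m
  proof
    let ?I = "{..m} \<times> {..m}"
    have fr: "finite (range (s n k))" for n k using simple_functionD(1)[OF s(1)[of n k]] sp by simp
    have "range (key m) \<subseteq> (\<lambda>\<psi> p. if p \<in> ?I then \<psi> p else 0) ` (\<Pi>\<^sub>E p\<in>?I. range (s (fst p) (snd p)))"
    proof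
      fix \<phi> assume "\<phi> \<in> range (key m)"
      then obtain x where x: "\<phi> = key m x" by auto
      show "\<phi> \<in> (\<lambda>\<psi> p. if p \<in> ?I then \<psi> p else 0) ` (\<Pi>\<^sub>E p\<in>?I. range (s (fst p) (snd p)))"
        by (rule image_eqI[of _ _ "restrict (\<lambda>p. s (fst p) (snd p) x) ?I"]) (auto simp: x key_def)
    qed
    moreover have "finite (\<Pi>\<^sub>E p\<in>?I. range (s (fst p) (snd p)))" by (intro finite_PiE fr) auto
    ultimately show "finite (range (key m))" by (rule finite_subset[OF _ finite_imageI])
    fix \<phi>
    have eq: "key m -` {\<phi>} = (if (\<forall>p. p \<notin> ?I \<longrightarrow> \<phi> p = 0) then (\<Inter>p\<in>?I. s (fst p) (snd p) -` {\<phi> p}) else {})"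
      by (auto simp: key_def fun_eq_iff split: if_splits)
    have ps: "s (fst p) (snd p) -` {\<phi> p} \<in> sets M" for p
      using simple_functionD(2)[OF s(1)[of "fst p" "snd p"], of "{\<phi> p}"] sp by simp
    show "key m -` {\<phi>} \<in> sets M"
      unfolding eq using ps by (auto intro!: countable_Un_Int(2))
  qed
  have conv: "(\<lambda>m. l2norm M (\<lambda>x. Econd M (key m) (u n) x - u n x)) \<longlonglongrightarrow> 0" for n
  proof (rule LIMSEQ_I)
    fix r :: real assume r: "0 < r"
    obtain K where K: "\<And>k. k \<ge> K \<Longrightarrow> norm (l2norm M (\<lambda>x. s n k x - u n x) - 0) < r / 2"
      using LIMSEQ_D[OF sconv[of n], of "r/2"] r by auto
    show "\<exists>no. \<forall>m\<ge>no. norm (l2norm M (\<lambda>x. Econd M (key m) (u n) x - u n x) - 0) < r"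
    proof (intro exI[of _ "max n K"] allI impI)
      fix m assume m: "max n K \<le> m"
      interpret kc: keyctx M "key m" by (rule kc)
      have fixs: "ae_eq M (Econd M (key m) (s n K)) (s n K)"
        by (rule kc.Econd_fix[OF sL, of _ _ "\<lambda>\<phi>. \<phi> (n, K)"]) (use m in \<open>auto simp: key_def\<close>)
      have "l2norm M (\<lambda>x. Econd M (key m) (u n) x - u n x) \<le> 2 * l2norm M (\<lambda>x. u n x - s n K x)"
        by (rule kc.Econd_approx[OF u sL fixs])
      also have "\<dots> = 2 * l2norm M (\<lambda>x. s n K x - u n x)"
        using kc.l2norm_minus_commute by simp
      also have "\<dots> < r" using K[of K] by simp
      finally show "norm (l2norm M (\<lambda>x. Econd M (key m) (u n) x - u n x) - 0) < r" by simp
    qed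
  qed
  show ?thesis using kc conv by blast
qed

end


context finite_measure begin

lemma tc_pairD: assumes "tc_pair M \<xi> \<eta>"
  shows "\<And>n. \<xi> n \<in> L2 M" "\<And>n. \<eta> n \<in> L2 M" "summable (\<lambda>n. (l2norm M (\<xi> n))\<^sup>2)" "summable (\<lambda>n. (l2norm M (\<eta> n))\<^sup>2)"
  using assms by (auto simp: tc_pair_def)

lemma tannery_tc:
  assumes tc: "tc_pair M \<xi> \<eta>" and T: "bop M T"
    and GL: "\<And>m n. G m (\<xi> n) \<in> L2 M" and Gn: "\<And>m n. l2norm M (G m (\<xi> n)) \<le> l2norm M (\<xi> n)"
    and Gc: "\<And>n. (\<lambda>m. l2norm M (\<lambda>x. G m (\<xi> n) x - \<xi> n x)) \<longlonglongrightarrow> 0"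
  shows "(\<lambda>m. \<Sum>n. l2inner M (T (G m (\<xi> n))) (\<eta> n)) \<longlonglongrightarrow> (\<Sum>n. l2inner M (T (\<xi> n)) (\<eta> n))"
proof -
  note td = tc_pairD[OF tc]
  let ?C = "opnorm M T"
  have C0: "0 \<le> ?C" by (rule opnorm_nonneg[OF T])
  have lim: "(\<lambda>m. l2inner M (T (G m (\<xi> k))) (\<eta> k)) \<longlonglongrightarrow> l2inner M (T (\<xi> k)) (\<eta> k)" for k
  proof -
    have dL: "(\<lambda>x. G m (\<xi> k) x - \<xi> k x) \<in> L2 M" for m by (rule L2_diff[OF GL td(1)])
    have b: "norm (l2inner M (T (G m (\<xi> k))) (\<eta> k) - l2inner M (T (\<xi> k)) (\<eta> k))
        \<le> ?C * l2norm M (\<eta> k) * l2norm M (\<lambda>x. G m (\<xi> k) x - \<xi> k x)" for m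
    proof -
      have "l2inner M (T (G m (\<xi> k))) (\<eta> k) - l2inner M (T (\<xi> k)) (\<eta> k)
          = l2inner M (\<lambda>x. T (G m (\<xi> k)) x - T (\<xi> k) x) (\<eta> k)"
        by (rule l2inner_diff_left[OF bop_L2[OF T GL] bop_L2[OF T td(1)] td(2), symmetric])
      also have "\<dots> = l2inner M (T (\<lambda>x. G m (\<xi> k) x - \<xi> k x)) (\<eta> k)"
        by (rule l2inner_cong[OF L2_D(1)[OF L2_diff[OF bop_L2[OF T GL] bop_L2[OF T td(1)]]]
            L2_D(1)[OF bop_L2[OF T dL]] L2_D(1)[OF td(2)] ae_eq_sym[OF bop_diff[OF T GL td(1)]]])
      finally have "norm (l2inner M (T (G m (\<xi> k))) (\<eta> k) - l2inner M (T (\<xi> k)) (\<eta> k))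
          \<le> l2norm M (T (\<lambda>x. G m (\<xi> k) x - \<xi> k x)) * l2norm M (\<eta> k)"
        using l2inner_bound[OF bop_L2[OF T dL] td(2)] by simp
      also have "\<dots> \<le> (?C * l2norm M (\<lambda>x. G m (\<xi> k) x - \<xi> k x)) * l2norm M (\<eta> k)"
        by (rule mult_right_mono[OF opnorm_bound[OF T dL]]) simp
      finally show ?thesis by (simp add: mult.assoc mult.commute mult.left_commute)
    qed
    have "(\<lambda>m. ?C * l2norm M (\<eta> k) * l2norm M (\<lambda>x. G m (\<xi> k) x - \<xi> k x)) \<longlonglongrightarrow> ?C * l2norm M (\<eta> k) * 0"
      by (intro tendsto_mult tendsto_const Gc)
    then have z: "(\<lambda>m. ?C * l2norm M (\<eta> k) * l2norm M (\<lambda>x. G m (\<xi> k) x - \<xi> k x)) \<longlonglongrightarrow> 0" by simp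
    have "(\<lambda>m. l2inner M (T (G m (\<xi> k))) (\<eta> k) - l2inner M (T (\<xi> k)) (\<eta> k)) \<longlonglongrightarrow> 0"
      by (rule Lim_null_comparison[OF always_eventually z]) (use b in blast)
    from tendsto_add[OF this tendsto_const[of "l2inner M (T (\<xi> k)) (\<eta> k)"]]
    show ?thesis by simp
  qed
  have bound: "norm (l2inner M (T (G m (\<xi> k))) (\<eta> k)) \<le> ?C * ((l2norm M (\<xi> k))\<^sup>2 + (l2norm M (\<eta> k))\<^sup>2)" for k m
  proof -
    have "norm (l2inner M (T (G m (\<xi> k))) (\<eta> k)) \<le> l2norm M (T (G m (\<xi> k))) * l2norm M (\<eta> k)"
      by (rule l2inner_bound[OF bop_L2[OF T GL] td(2)])
    also have "\<dots> \<le> (?C * l2norm M (G m (\<xi> k))) * l2norm M (\<eta> k)"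
      by (rule mult_right_mono[OF opnorm_bound[OF T GL]]) simp
    also have "\<dots> \<le> (?C * l2norm M (\<xi> k)) * l2norm M (\<eta> k)"
      by (intro mult_right_mono mult_left_mono Gn C0) simp
    also have "\<dots> = ?C * (l2norm M (\<xi> k) * l2norm M (\<eta> k))" by simp
    also have "\<dots> \<le> ?C * ((l2norm M (\<xi> k))\<^sup>2 + (l2norm M (\<eta> k))\<^sup>2)"
      by (intro mult_left_mono sq_aux3 C0) simp_all
    finally show ?thesis .
  qed
  have summ: "summable (\<lambda>k. ?C * ((l2norm M (\<xi> k))\<^sup>2 + (l2norm M (\<eta> k))\<^sup>2))"
    using summable_add[OF td(3) td(4)] by (rule summable_mult)
  have "eventually (\<lambda>m. summable (\<lambda>k. norm (l2inner M (T (G m (\<xi> k))) (\<eta> k)))) sequentially \<and>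
        summable (\<lambda>k. norm (l2inner M (T (\<xi> k)) (\<eta> k))) \<and>
        ((\<lambda>m. \<Sum>k. l2inner M (T (G m (\<xi> k))) (\<eta> k)) \<longlonglongrightarrow> (\<Sum>k. l2inner M (T (\<xi> k)) (\<eta> k)))"
  proof (rule tannerys_theorem[where a="\<lambda>k m. l2inner M (T (G m (\<xi> k))) (\<eta> k)"
      and b="\<lambda>k. l2inner M (T (\<xi> k)) (\<eta> k)" and F=sequentially
      and M="\<lambda>k. ?C * ((l2norm M (\<xi> k))\<^sup>2 + (l2norm M (\<eta> k))\<^sup>2)"])
    show "\<And>k. (\<lambda>m. l2inner M (T (G m (\<xi> k))) (\<eta> k)) \<longlonglongrightarrow> l2inner M (T (\<xi> k)) (\<eta> k)" by (rule lim)
    show "summable (\<lambda>k. ?C * ((l2norm M (\<xi> k))\<^sup>2 + (l2norm M (\<eta> k))\<^sup>2))" by (rule summ)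
    show "\<forall>\<^sub>F (k, m) in at_top \<times>\<^sub>F sequentially. norm (l2inner M (T (G m (\<xi> k))) (\<eta> k))
           \<le> ?C * ((l2norm M (\<xi> k))\<^sup>2 + (l2norm M (\<eta> k))\<^sup>2)"
      by (rule always_eventually) (simp add: split_beta bound)
  qed simp
  then show ?thesis by blast
qed

lemma uniq_V:
  assumes sp: "space M = UNIV" and tc1: "tc_pair M \<xi>1 \<eta>1" and tc2: "tc_pair M \<xi>2 \<eta>2"
    and hyp: "\<And>k. k \<in> L2 (M \<Otimes>\<^sub>M M) \<Longrightarrow> bop M (kernel_op M k) \<Longrightarrow>
        tc_fun M \<xi>1 \<eta>1 (kernel_op M k) = tc_fun M \<xi>2 \<eta>2 (kernel_op M k)"
    and T: "bop M T"
  shows "tc_fun M \<xi>1 \<eta>1 T = tc_fun M \<xi>2 \<eta>2 T"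
proof -
  note t1 = tc_pairD[OF tc1] and t2 = tc_pairD[OF tc2]
  define u where "u n = (if even n then \<xi>1 (n div 2) else \<xi>2 (n div 2))" for n
  have u: "u n \<in> L2 M" for n using t1 t2 by (simp add: u_def)
  obtain key :: "nat \<Rightarrow> 'a \<Rightarrow> (nat \<times> nat \<Rightarrow> complex)" where kc: "\<And>m. keyctx M (key m)"
    and conv: "\<And>n. (\<lambda>m. l2norm M (\<lambda>x. Econd M (key m) (u n) x - u n x)) \<longlonglongrightarrow> 0"
    using approx_keys[OF sp, of u] u by blast
  have u1: "u (2*n) = \<xi>1 n" and u2: "u (Suc (2*n)) = \<xi>2 n" for n by (simp_all add: u_def)
  have step: "tc_fun M \<xi> \<eta> (kernel_op M (keyctx.kk M (key m) T)) = (\<Sum>n. l2inner M (T (Econd M (key m) (\<xi> n))) (\<eta> n))"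
    if tc: "tc_pair M \<xi> \<eta>" for \<xi> \<eta> m
  proof -
    interpret kc: keyctx M "key m" by (rule kc)
    note td = tc_pairD[OF tc]
    have "l2inner M (kernel_op M (kc.kk T) (\<xi> n)) (\<eta> n) = l2inner M (T (Econd M (key m) (\<xi> n))) (\<eta> n)" for n
      by (rule l2inner_cong[OF _ _ _ kc.kk_props(3)[OF T td(1)]])
         (auto intro!: L2_D(1) bop_L2[OF T] kc.Econd_L2 td bop_L2[OF kc.kk_props(2)[OF T]])
    then show ?thesis unfolding tc_fun_def by simp
  qed
  have lim: "(\<lambda>m. tc_fun M \<xi> \<eta> (kernel_op M (keyctx.kk M (key m) T))) \<longlonglongrightarrow> tc_fun M \<xi> \<eta> T"
    if tc: "tc_pair M \<xi> \<eta>" and cv: "\<And>n. (\<lambda>m. l2norm M (\<lambda>x. Econd M (key m) (\<xi> n) x - \<xi> n x)) \<longlonglongrightarrow> 0"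
    for \<xi> \<eta>
  proof -
    have e: "(\<lambda>m. tc_fun M \<xi> \<eta> (kernel_op M (keyctx.kk M (key m) T))) = (\<lambda>m. \<Sum>n. l2inner M (T (Econd M (key m) (\<xi> n))) (\<eta> n))"
      using step[OF tc] by (intro ext) blast
    have "(\<lambda>m. \<Sum>n. l2inner M (T (Econd M (key m) (\<xi> n))) (\<eta> n)) \<longlonglongrightarrow> (\<Sum>n. l2inner M (T (\<xi> n)) (\<eta> n))"
    proof (rule tannery_tc[OF tc T])
      fix m n
      interpret kc: keyctx M "key m" by (rule kc)
      show "Econd M (key m) (\<xi> n) \<in> L2 M" by (rule kc.Econd_L2)
      show "l2norm M (Econd M (key m) (\<xi> n)) \<le> l2norm M (\<xi> n)" by (rule kc.Econd_norm[OF tc_pairD(1)[OF tc]])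
    qed (rule cv)
    then show ?thesis by (simp only: e tc_fun_def[of M \<xi> \<eta> T])
  qed
  have eq: "tc_fun M \<xi>1 \<eta>1 (kernel_op M (keyctx.kk M (key m) T)) = tc_fun M \<xi>2 \<eta>2 (kernel_op M (keyctx.kk M (key m) T))" for m
  proof -
    interpret kc: keyctx M "key m" by (rule kc)
    show ?thesis by (rule hyp[OF kc.kk_props(1)[OF T] kc.kk_props(2)[OF T]])
  qed
  have l1: "(\<lambda>m. tc_fun M \<xi>1 \<eta>1 (kernel_op M (keyctx.kk M (key m) T))) \<longlonglongrightarrow> tc_fun M \<xi>1 \<eta>1 T"
    by (rule lim[OF tc1]) (use conv[of "2*_"] u1 in simp)
  have l2: "(\<lambda>m. tc_fun M \<xi>1 \<eta>1 (kernel_op M (keyctx.kk M (key m) T))) \<longlonglongrightarrow> tc_fun M \<xi>2 \<eta>2 T"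
    unfolding eq by (rule lim[OF tc2]) (use conv[of "Suc (2*_)"] u2 in simp)
  show ?thesis using LIMSEQ_unique[OF l1 l2] .
qed

end


lemma op_eq_trans: "op_eq M R S \<Longrightarrow> op_eq M S T \<Longrightarrow> op_eq M R T"
  unfolding op_eq_def using ae_eq_trans by blast

lemma op_eq_sym: "op_eq M R S \<Longrightarrow> op_eq M S R"
  unfolding op_eq_def using ae_eq_sym by blast

lemma cnj_indicator[simp]: "cnj (indicator A x :: complex) = indicator A x"
  by (simp add: indicator_def)

context finite_measure begin

definition "sing g = (\<lambda>n::nat. if n = 0 then g else (\<lambda>x. 0))"

lemma tc_fun_sing: assumes "bop M S"
  shows "tc_fun M (sing g) (sing h) S = l2inner M (S g) h"
proof -
  have "(\<lambda>n. l2inner M (S (sing g n)) (sing h n)) = (\<lambda>n. if n = 0 then l2inner M (S g) h else 0)"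
    by (auto simp: sing_def l2inner_def)
  then show ?thesis unfolding tc_fun_def using sums_unique[OF sums_single[of 0 "\<lambda>_. l2inner M (S g) h"]]
    by simp
qed

lemma tc_pair_sing: assumes "g \<in> L2 M" "h \<in> L2 M" shows "tc_pair M (sing g) (sing h)"
proof -
  have s: "summable (\<lambda>n. (l2norm M (sing f n))\<^sup>2)" for f
  proof -
    have "(\<lambda>n. (l2norm M (sing f n))\<^sup>2) = (\<lambda>n. if n = 0 then (l2norm M f)\<^sup>2 else 0)"
      by (auto simp: sing_def)
    then show ?thesis using sums_single[of 0 "\<lambda>_. (l2norm M f)\<^sup>2"] by (simp add: sums_iff)
  qed
  show ?thesis unfolding tc_pair_def using assms s by (auto simp: sing_def)
qed

lemma uniq_U:
  assumes sp: "space M = UNIV"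
    and b1: "\<And>T. bop M T \<Longrightarrow> bop M (\<Psi>1 T)" and b2: "\<And>T. bop M T \<Longrightarrow> bop M (\<Psi>2 T)"
    and n1: "\<And>\<xi> \<eta>. tc_pair M \<xi> \<eta> \<Longrightarrow> \<exists>\<xi>' \<eta>'. tc_pair M \<xi>' \<eta>' \<and> (\<forall>T. bop M T \<longrightarrow> tc_fun M \<xi> \<eta> (\<Psi>1 T) = tc_fun M \<xi>' \<eta>' T)"
    and n2: "\<And>\<xi> \<eta>. tc_pair M \<xi> \<eta> \<Longrightarrow> \<exists>\<xi>' \<eta>'. tc_pair M \<xi>' \<eta>' \<and> (\<forall>T. bop M T \<longrightarrow> tc_fun M \<xi> \<eta> (\<Psi>2 T) = tc_fun M \<xi>' \<eta>' T)"
    and ag: "\<And>k. k \<in> L2 (M \<Otimes>\<^sub>M M) \<Longrightarrow> op_eq M (\<Psi>1 (kernel_op M k)) (\<Psi>2 (kernel_op M k))"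
    and T: "bop M T"
  shows "op_eq M (\<Psi>1 T) (\<Psi>2 T)"
  unfolding op_eq_def
proof
  fix f assume f: "f \<in> L2 M"
  have L1: "\<Psi>1 T f \<in> L2 M" and L2': "\<Psi>2 T f \<in> L2 M" using bop_L2 b1 b2 T f by auto
  define d where "d = (\<lambda>x. \<Psi>1 T f x - \<Psi>2 T f x)"
  have d: "d \<in> L2 M" unfolding d_def by (rule L2_diff[OF L1 L2'])
  have tc: "tc_pair M (sing f) (sing d)" by (rule tc_pair_sing[OF f d])
  obtain \<xi>1 \<eta>1 where t1: "tc_pair M \<xi>1 \<eta>1" and e1: "\<And>T. bop M T \<Longrightarrow> tc_fun M (sing f) (sing d) (\<Psi>1 T) = tc_fun M \<xi>1 \<eta>1 T"
    using n1[OF tc] by blast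
  obtain \<xi>2 \<eta>2 where t2: "tc_pair M \<xi>2 \<eta>2" and e2: "\<And>T. bop M T \<Longrightarrow> tc_fun M (sing f) (sing d) (\<Psi>2 T) = tc_fun M \<xi>2 \<eta>2 T"
    using n2[OF tc] by blast
  have "tc_fun M \<xi>1 \<eta>1 T = tc_fun M \<xi>2 \<eta>2 T"
  proof (rule uniq_V[OF sp t1 t2 _ T])
    fix k assume k: "k \<in> L2 (M \<Otimes>\<^sub>M M)" and K: "bop M (kernel_op M k)"
    have "tc_fun M \<xi>1 \<eta>1 (kernel_op M k) = l2inner M (\<Psi>1 (kernel_op M k) f) d"
      using e1[OF K] tc_fun_sing[OF b1[OF K]] by simp
    also have "\<dots> = l2inner M (\<Psi>2 (kernel_op M k) f) d"
      using ag[OF k] f unfolding op_eq_def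
      by (intro l2inner_cong L2_D(1)[OF bop_L2[OF b1[OF K] f]] L2_D(1)[OF bop_L2[OF b2[OF K] f]] L2_D(1)[OF d]) auto
    also have "\<dots> = tc_fun M \<xi>2 \<eta>2 (kernel_op M k)"
      using e2[OF K] tc_fun_sing[OF b2[OF K]] by simp
    finally show "tc_fun M \<xi>1 \<eta>1 (kernel_op M k) = tc_fun M \<xi>2 \<eta>2 (kernel_op M k)" .
  qed
  then have "l2inner M (\<Psi>1 T f) d = l2inner M (\<Psi>2 T f) d"
    using e1[OF T] e2[OF T] tc_fun_sing[OF b1[OF T]] tc_fun_sing[OF b2[OF T]] by simp
  then have "l2inner M d d = 0"
    unfolding d_def using l2inner_diff_left[OF L1 L2' d] by (simp add: d_def)
  then have "l2norm M d = 0" using l2inner_self[OF d] by simp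
  then have "AE x in M. d x = 0" using l2norm_eq0[OF d] by simp
  then show "ae_eq M (\<Psi>1 T f) (\<Psi>2 T f)" unfolding ae_eq_def d_def by (rule AE_mp) (auto intro!: AE_I2)
qed

end


lemma kernel_comp:
  "mult_op (indicator A) \<circ> kernel_op M k \<circ> mult_op (indicator B) = kernel_op M (\<lambda>p. indicator (A \<times> B) p * k p)"
proof (intro ext)
  fix f s
  have "(LINT t|M. indicator (A \<times> B) (s, t) * k (s, t) * f t) = (LINT t|M. indicator A s * (k (s, t) * (indicator B t * f t)))"
    by (intro Bochner_Integration.integral_cong) (auto simp: indicator_def)
  also have "\<dots> = indicator A s * (LINT t|M. k (s, t) * (indicator B t * f t))" by simp
  finally show "(mult_op (indicator A) \<circ> kernel_op M k \<circ> mult_op (indicator B)) f s =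
      kernel_op M (\<lambda>p. indicator (A \<times> B) p * k p) f s"
    by (simp add: mult_op_def kernel_op_def)
qed

lemma kernel_ind_L2: assumes k: "k \<in> L2 N" and AB: "A \<times> B \<in> sets N"
  shows "(\<lambda>p. indicator (A \<times> B) p * k p) \<in> L2 N"
proof -
  have [measurable]: "k \<in> borel_measurable N" using k by (simp add: L2_def)
  have im: "(indicator (A \<times> B) :: _ \<Rightarrow> complex) \<in> borel_measurable N" using AB by (rule borel_measurable_indicator)
  have "integrable N (\<lambda>p. (cmod (indicator (A \<times> B) p * k p))\<^sup>2)"
  proof (rule Bochner_Integration.integrable_bound[of N "\<lambda>p. (cmod (k p))\<^sup>2"])
    show "integrable N (\<lambda>p. (cmod (k p))\<^sup>2)" using k by (simp add: L2_def)
    show "AE p in N. norm ((cmod (indicator (A \<times> B) p * k p))\<^sup>2) \<le> norm ((cmod (k p))\<^sup>2)"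
      by (rule AE_I2) (auto simp: indicator_def)
  qed (use im in measurable)
  then show ?thesis using im unfolding L2_def by auto
qed

context finite_measure begin

lemma Zlem:
  assumes sp: "space M = UNIV" and Phi: "NCB_D M \<Phi>" and sym: "has_symbol M \<Phi> \<phi>"
    and A: "A \<in> sets M" and B: "B \<in> sets M"
    and b: "\<And>T. bop M T \<Longrightarrow> bop M (\<Psi> T)"
    and n: "\<And>\<xi> \<eta>. tc_pair M \<xi> \<eta> \<Longrightarrow> \<exists>\<xi>' \<eta>'. tc_pair M \<xi>' \<eta>' \<and> (\<forall>T. bop M T \<longrightarrow> tc_fun M \<xi> \<eta> (\<Psi> T) = tc_fun M \<xi>' \<eta>' T)"
    and k\<Psi>: "\<And>k. k \<in> L2 (M \<Otimes>\<^sub>M M) \<Longrightarrow> op_eq M (\<Psi> (kernel_op M k)) (kernel_op M (\<lambda>p. indicator (A \<times> B) p * \<phi> p * k p))"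
    and T: "bop M T"
  shows "op_eq M (\<Psi> T) (mult_op (indicator A) \<circ> \<Phi> T \<circ> mult_op (indicator B))"
proof -
  have n\<Phi>: "\<And>\<xi> \<eta>. tc_pair M \<xi> \<eta> \<Longrightarrow> \<exists>\<xi>' \<eta>'. tc_pair M \<xi>' \<eta>' \<and> (\<forall>T. bop M T \<longrightarrow> tc_fun M \<xi> \<eta> (\<Phi> T) = tc_fun M \<xi>' \<eta>' T)"
    using Phi unfolding NCB_D_def by blast
  have bim: "\<And>a b T. a \<in> Linf M \<Longrightarrow> b \<in> Linf M \<Longrightarrow> bop M T \<Longrightarrow>
        op_eq M (\<Phi> (mult_op a \<circ> T \<circ> mult_op b)) (mult_op a \<circ> \<Phi> T \<circ> mult_op b)"
    using Phi unfolding NCB_D_def by blast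
  have ksym: "\<And>k. k \<in> L2 (M \<Otimes>\<^sub>M M) \<Longrightarrow> op_eq M (\<Phi> (kernel_op M k)) (kernel_op M (\<lambda>p. \<phi> p * k p))"
    using sym unfolding has_symbol_def by blast
  define \<Psi>2 where "\<Psi>2 T = \<Phi> (mult_op (indicator A) \<circ> T \<circ> mult_op (indicator B))" for T
  have b2: "bop M (\<Psi>2 T)" if "bop M T" for T
    unfolding \<Psi>2_def by (rule NCB_bop[OF Phi bop_ind_comp[OF that A B]])
  have n2: "\<exists>\<xi>' \<eta>'. tc_pair M \<xi>' \<eta>' \<and> (\<forall>T. bop M T \<longrightarrow> tc_fun M \<xi> \<eta> (\<Psi>2 T) = tc_fun M \<xi>' \<eta>' T)"
    if tc: "tc_pair M \<xi> \<eta>" for \<xi> \<eta>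
  proof -
    obtain \<xi>' \<eta>' where t': "tc_pair M \<xi>' \<eta>'" and e': "\<And>T. bop M T \<Longrightarrow> tc_fun M \<xi> \<eta> (\<Phi> T) = tc_fun M \<xi>' \<eta>' T"
      using n\<Phi>[OF tc] by blast
    note td = tc_pairD[OF t']
    define \<xi>'' where "\<xi>'' n = (\<lambda>x. indicator B x * \<xi>' n x)" for n
    define \<eta>'' where "\<eta>'' n = (\<lambda>x. indicator A x * \<eta>' n x)" for n
    have sq: "(l2norm M (\<lambda>x. indicator C x * g x))\<^sup>2 \<le> (l2norm M g)\<^sup>2" if "g \<in> L2 M" "C \<in> sets M" for g C
      by (intro power_mono l2norm_mult_le that borel_measurable_indicator) (auto simp: cmod_indicator_le)
    have t'': "tc_pair M \<xi>'' \<eta>''"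
      unfolding tc_pair_def
    proof (intro conjI allI)
      fix n
      show "\<xi>'' n \<in> L2 M" unfolding \<xi>''_def by (rule L2_mult_indicator[OF B td(1)])
      show "\<eta>'' n \<in> L2 M" unfolding \<eta>''_def by (rule L2_mult_indicator[OF A td(2)])
    next
      show "summable (\<lambda>n. (l2norm M (\<xi>'' n))\<^sup>2)" unfolding \<xi>''_def
        by (rule summable_comparison_test'[OF td(3), of 0]) (simp add: sq[OF td(1) B])
      show "summable (\<lambda>n. (l2norm M (\<eta>'' n))\<^sup>2)" unfolding \<eta>''_def
        by (rule summable_comparison_test'[OF td(4), of 0]) (simp add: sq[OF td(2) A])
    qed
    have "tc_fun M \<xi> \<eta> (\<Psi>2 T) = tc_fun M \<xi>'' \<eta>'' T" if T: "bop M T" for T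
    proof -
      have "tc_fun M \<xi> \<eta> (\<Psi>2 T) = tc_fun M \<xi>' \<eta>' (mult_op (indicator A) \<circ> T \<circ> mult_op (indicator B))"
        unfolding \<Psi>2_def by (rule e'[OF bop_ind_comp[OF T A B]])
      also have "\<dots> = tc_fun M \<xi>'' \<eta>'' T"
        unfolding tc_fun_def l2inner_def \<xi>''_def \<eta>''_def
        by (intro suminf_cong Bochner_Integration.integral_cong) (auto simp: mult_op_def)
      finally show ?thesis .
    qed
    then show ?thesis using t'' by blast
  qed
  have ag: "op_eq M (\<Psi> (kernel_op M k)) (\<Psi>2 (kernel_op M k))" if k: "k \<in> L2 (M \<Otimes>\<^sub>M M)" for k
  proof -
    have kAB: "(\<lambda>p. indicator (A \<times> B) p * k p) \<in> L2 (M \<Otimes>\<^sub>M M)"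
      by (rule kernel_ind_L2[OF k]) (use A B in auto)
    have "\<Psi>2 (kernel_op M k) = \<Phi> (kernel_op M (\<lambda>p. indicator (A \<times> B) p * k p))"
      unfolding \<Psi>2_def kernel_comp ..
    then have "op_eq M (\<Psi>2 (kernel_op M k)) (kernel_op M (\<lambda>p. \<phi> p * (indicator (A \<times> B) p * k p)))"
      using ksym[OF kAB] by simp
    moreover have "(\<lambda>p. \<phi> p * (indicator (A \<times> B) p * k p)) = (\<lambda>p. indicator (A \<times> B) p * \<phi> p * k p)"
      by (auto simp: ac_simps)
    ultimately have "op_eq M (\<Psi>2 (kernel_op M k)) (kernel_op M (\<lambda>p. indicator (A \<times> B) p * \<phi> p * k p))"
      by simp
    then show ?thesis using k\<Psi>[OF k] op_eq_trans op_eq_sym by blast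
  qed
  have "op_eq M (\<Psi> T) (\<Psi>2 T)"
    by (rule uniq_U[OF sp b b2 n n2 ag T])
  moreover have "op_eq M (\<Psi>2 T) (mult_op (indicator A) \<circ> \<Phi> T \<circ> mult_op (indicator B))"
    unfolding \<Psi>2_def by (rule bim[OF indicator_Linf[OF A] indicator_Linf[OF B] T])
  ultimately show ?thesis by (rule op_eq_trans)
qed

end


context finite_measure begin

lemma nnI: assumes "h \<in> L2 M" shows "(\<integral>\<^sup>+x. ennreal ((cmod (h x))\<^sup>2) \<partial>M) = ennreal ((l2norm M h)\<^sup>2)"
  using nn_integral_eq_integral[OF L2_D(2)[OF assms]] by (simp add: l2norm_sq)

lemma opnorm_cong: assumes "bop M S1" "bop M S2" "op_eq M S1 S2" shows "opnorm M S1 = opnorm M S2"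
proof -
  have eq: "l2norm M (S1 f) = l2norm M (S2 f)" if "f \<in> L2 M" for f
    using assms(3) that unfolding op_eq_def
    by (intro l2norm_L2_cong bop_L2[OF assms(1) that] bop_L2[OF assms(2) that]) auto
  have "{l2norm M (S1 f) |f. f \<in> L2 M \<and> l2norm M f \<le> 1} = {l2norm M (S2 f) |f. f \<in> L2 M \<and> l2norm M f \<le> 1}"
  proof (intro set_eqI iffI)
    fix y assume "y \<in> {l2norm M (S1 f) |f. f \<in> L2 M \<and> l2norm M f \<le> 1}"
    then obtain f where f: "f \<in> L2 M" "l2norm M f \<le> 1" "y = l2norm M (S1 f)" by blast
    show "y \<in> {l2norm M (S2 f) |f. f \<in> L2 M \<and> l2norm M f \<le> 1}"
      using f eq[OF f(1)] by (intro CollectI exI[of _ f]) simp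
  next
    fix y assume "y \<in> {l2norm M (S2 f) |f. f \<in> L2 M \<and> l2norm M f \<le> 1}"
    then obtain f where f: "f \<in> L2 M" "l2norm M f \<le> 1" "y = l2norm M (S2 f)" by blast
    show "y \<in> {l2norm M (S1 f) |f. f \<in> L2 M \<and> l2norm M f \<le> 1}"
      using f eq[OF f(1)] by (intro CollectI exI[of _ f]) simp
  qed
  then show ?thesis unfolding opnorm_def by simp
qed

end

theorem lemma7p1:
  fixes M :: "'a::polish_space measure"
    and \<Phi> :: "'a opmap" and \<phi> :: "'a \<times> 'a \<Rightarrow> complex"
    and R C :: "nat \<Rightarrow> 'a set" and \<Phi>j :: "nat \<Rightarrow> 'a opmap"
  assumes "sets M = sets borel" and "finite_measure M"
    and "NCB_D M \<Phi>" and "has_symbol M \<Phi> \<phi>"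
    and "\<And>j. R j \<in> sets borel" and "disjoint_family R" and "(\<Union>j. R j) = UNIV"
    and "\<And>j. C j \<in> sets borel" and "disjoint_family C" and "(\<Union>j. C j) = UNIV"
    and "{p. \<phi> p \<noteq> 0} \<subseteq> (\<Union>j. R j \<times> C j)"
    and "\<And>j. NCB_D M (\<Phi>j j)"
    and "\<And>j. has_symbol M (\<Phi>j j) (\<lambda>p. indicator (R j \<times> C j) p * \<phi> p)"
  shows "ereal (mapnorm M \<Phi>) = (SUP j. ereal (mapnorm M (\<Phi>j j)))"
proof -
  interpret finite_measure M by (rule assms(2))
  have sp: "space M = UNIV" using sets_eq_imp_space_eq[OF assms(1)] by simp
  have RM: "R j \<in> sets M" for j using assms(1,5) by simp
  have CM: "C j \<in> sets M" for j using assms(1,8) by simp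
  have CcM: "- C j \<in> sets M" for j using sets.compl_sets[OF CM[of j]] sp by (simp add: Compl_eq_Diff_UNIV)
  note Phi = assms(3) and sym = assms(4)
  have Fj: "op_eq M (\<Phi>j j T) (mult_op (indicator (R j)) \<circ> \<Phi> T \<circ> mult_op (indicator (C j)))"
    if T: "bop M T" for j T
  proof (rule Zlem[OF sp Phi sym RM CM _ _ _ T])
    show "\<And>T. bop M T \<Longrightarrow> bop M (\<Phi>j j T)" using assms(12) by (rule NCB_bop)
    show "\<And>\<xi> \<eta>. tc_pair M \<xi> \<eta> \<Longrightarrow> \<exists>\<xi>' \<eta>'. tc_pair M \<xi>' \<eta>' \<and> (\<forall>T. bop M T \<longrightarrow> tc_fun M \<xi> \<eta> (\<Phi>j j T) = tc_fun M \<xi>' \<eta>' T)"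
      using assms(12)[of j] unfolding NCB_D_def by blast
    show "\<And>k. k \<in> L2 (M \<Otimes>\<^sub>M M) \<Longrightarrow> op_eq M (\<Phi>j j (kernel_op M k)) (kernel_op M (\<lambda>p. indicator (R j \<times> C j) p * \<phi> p * k p))"
      using assms(13)[of j] unfolding has_symbol_def by blast
  qed
  have zero: "indicator (R i \<times> - C i) p * \<phi> p = 0" for i p
  proof (cases "\<phi> p = 0")
    case False
    then obtain j where j: "fst p \<in> R j" "snd p \<in> C j" using assms(11) by (cases p) auto
    show ?thesis
    proof (cases "fst p \<in> R i")
      case True
      then have "i = j" using j assms(6) unfolding disjoint_family_on_def by blast
      then show ?thesis using j by (cases p) (auto simp: indicator_def)
    qed (cases p, auto simp: indicator_def)
  qed simp
  have F0: "op_eq M (\<lambda>f x. 0) (mult_op (indicator (R i)) \<circ> \<Phi> T \<circ> mult_op (indicator (- C i)))"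
    if T: "bop M T" for i T
  proof (rule Zlem[OF sp Phi sym RM CcM, where \<Psi>="\<lambda>T f x. 0", OF _ _ _ T])
    show "\<And>T. bop M T \<Longrightarrow> bop M (\<lambda>f x. 0)" by (rule bop_zero_op)
    show "\<exists>\<xi>' \<eta>'. tc_pair M \<xi>' \<eta>' \<and> (\<forall>T. bop M T \<longrightarrow> tc_fun M \<xi> \<eta> (\<lambda>f x. 0) = tc_fun M \<xi>' \<eta>' T)"
      for \<xi> \<eta>
    proof (intro exI conjI allI impI)
      show "tc_pair M (\<lambda>n x. 0) (\<lambda>n x. 0)" by (simp add: tc_pair_def)
      fix T show "tc_fun M \<xi> \<eta> (\<lambda>f x. 0) = tc_fun M (\<lambda>n x. 0) (\<lambda>n x. 0) T"
        by (simp add: tc_fun_def l2inner_def)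
    qed
    show "op_eq M (\<lambda>f x. 0) (kernel_op M (\<lambda>p. indicator (R i \<times> - C i) p * \<phi> p * k p))" for k
      by (simp add: op_eq_def kernel_op_def zero ae_eq_def)
  qed
  have ub: "mapnorm M (\<Phi>j j) \<le> mapnorm M \<Phi>" for j
  proof (rule mapnorm_le)
    fix T assume T: "bop M T" "opnorm M T \<le> 1"
    have bS: "bop M (\<Phi> T)" by (rule NCB_bop[OF Phi T(1)])
    have "opnorm M (\<Phi>j j T) = opnorm M (mult_op (indicator (R j)) \<circ> \<Phi> T \<circ> mult_op (indicator (C j)))"
      by (rule opnorm_cong[OF NCB_bop[OF assms(12) T(1)] bop_ind_comp[OF bS RM CM] Fj[OF T(1)]])
    also have "\<dots> \<le> opnorm M (\<Phi> T)" by (rule opnorm_ind_comp[OF bS RM CM])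
    also have "\<dots> \<le> mapnorm M \<Phi>" by (rule mapnorm_upper[OF Phi T])
    finally show "opnorm M (\<Phi>j j T) \<le> mapnorm M \<Phi>" .
  qed
  have lb: "mapnorm M \<Phi> \<le> s" if s0: "0 \<le> s" and hs: "\<And>j. mapnorm M (\<Phi>j j) \<le> s" for s
  proof (rule mapnorm_le)
    fix T assume T: "bop M T" "opnorm M T \<le> 1"
    define S where "S = \<Phi> T"
    have bS: "bop M S" unfolding S_def by (rule NCB_bop[OF Phi T(1)])
    have key: "l2norm M (S f) \<le> s * l2norm M f" if f: "f \<in> L2 M" for f
    proof -
      have [measurable]: "S f \<in> borel_measurable M" by (rule L2_D(1)[OF bop_L2[OF bS f]])
      have [measurable]: "f \<in> borel_measurable M" by (rule L2_D(1)[OF f])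
      define g where "g i = \<Phi>j i T (\<lambda>x. indicator (C i) x * f x)" for i
      have Qf: "(\<lambda>x. indicator (C i) x * f x) \<in> L2 M" for i by (rule L2_mult_indicator[OF CM f])
      have Q'f: "(\<lambda>x. indicator (- C i) x * f x) \<in> L2 M" for i by (rule L2_mult_indicator[OF CcM f])
      have gL: "g i \<in> L2 M" for i unfolding g_def by (rule bop_L2[OF NCB_bop[OF assms(12) T(1)] Qf])
      have ae: "AE x in M. indicator (R i) x * S f x = g i x" for i
      proof -
        have split: "f = (\<lambda>x. indicator (C i) x * f x + indicator (- C i) x * f x)"
          by (auto simp: indicator_def)
        have a1: "ae_eq M (S f) (\<lambda>x. S (\<lambda>x. indicator (C i) x * f x) x + S (\<lambda>x. indicator (- C i) x * f x) x)"
        proof -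
          from split have e: "S f = S (\<lambda>x. indicator (C i) x * f x + indicator (- C i) x * f x)" by (rule arg_cong)
          show ?thesis unfolding e by (rule bop_add[OF bS Qf[of i] Q'f[of i]])
        qed
        have a2: "ae_eq M (\<lambda>x. 0) (\<lambda>x. indicator (R i) x * S (\<lambda>y. indicator (- C i) y * f y) x)"
          using F0[OF T(1), of i] f unfolding op_eq_def S_def by (auto simp: mult_op_def)
        have ii: "(\<lambda>y. indicator (C i) y * (indicator (C i) y * f y)) = (\<lambda>y. indicator (C i) y * f y)"
          by (auto simp: indicator_def)
        have a3: "ae_eq M (g i) (\<lambda>x. indicator (R i) x * S (\<lambda>y. indicator (C i) y * f y) x)"
          using Fj[OF T(1), of i] Qf[of i] unfolding op_eq_def S_def g_def by (auto simp: mult_op_def ii)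
        show ?thesis using a1 a2 a3 unfolding ae_eq_def
          by eventually_elim (simp add: distrib_left)
      qed
      have gb: "l2norm M (g i) \<le> s * l2norm M (\<lambda>x. indicator (C i) x * f x)" for i
      proof -
        have "l2norm M (g i) \<le> opnorm M (\<Phi>j i T) * l2norm M (\<lambda>x. indicator (C i) x * f x)"
          unfolding g_def by (rule opnorm_bound[OF NCB_bop[OF assms(12) T(1)] Qf])
        also have "\<dots> \<le> s * l2norm M (\<lambda>x. indicator (C i) x * f x)"
          by (intro mult_right_mono order_trans[OF mapnorm_upper[OF assms(12) T] hs]) simp
        finally show ?thesis .
      qed
      have "ennreal ((l2norm M (S f))\<^sup>2) = (\<integral>\<^sup>+x. ennreal ((cmod (S f x))\<^sup>2) \<partial>M)"
        by (rule nnI[OF bop_L2[OF bS f], symmetric])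
      also have "\<dots> = (\<integral>\<^sup>+x. (\<Sum>i. indicator (R i) x * ennreal ((cmod (S f x))\<^sup>2)) \<partial>M)"
        using suminf_indicator[OF assms(6)] assms(7) by simp
      also have "\<dots> = (\<Sum>i. \<integral>\<^sup>+x. indicator (R i) x * ennreal ((cmod (S f x))\<^sup>2) \<partial>M)"
        by (rule nn_integral_suminf) (use RM in measurable)
      also have "\<dots> = (\<Sum>i. \<integral>\<^sup>+x. ennreal ((cmod (g i x))\<^sup>2) \<partial>M)"
      proof (intro suminf_cong nn_integral_cong_AE)
        fix i
        show "AE x in M. indicator (R i) x * ennreal ((cmod (S f x))\<^sup>2) = ennreal ((cmod (g i x))\<^sup>2)"
          using ae[of i] by eventually_elim (auto simp: indicator_def)
      qed
      also have "\<dots> = (\<Sum>i. ennreal ((l2norm M (g i))\<^sup>2))" by (simp add: nnI[OF gL])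
      also have "\<dots> \<le> (\<Sum>i. ennreal (s\<^sup>2) * ennreal ((l2norm M (\<lambda>x. indicator (C i) x * f x))\<^sup>2))"
      proof (intro suminf_le summableI)
        fix i
        have "(l2norm M (g i))\<^sup>2 \<le> (s * l2norm M (\<lambda>x. indicator (C i) x * f x))\<^sup>2"
          by (rule power_mono[OF gb]) simp
        then show "ennreal ((l2norm M (g i))\<^sup>2) \<le> ennreal (s\<^sup>2) * ennreal ((l2norm M (\<lambda>x. indicator (C i) x * f x))\<^sup>2)"
          by (simp add: ennreal_mult[symmetric] power_mult_distrib)
      qed
      also have "\<dots> = ennreal (s\<^sup>2) * (\<Sum>i. \<integral>\<^sup>+x. indicator (C i) x * ennreal ((cmod (f x))\<^sup>2) \<partial>M)"
      proof -
        have "ennreal ((l2norm M (\<lambda>x. indicator (C i) x * f x))\<^sup>2) = (\<integral>\<^sup>+x. indicator (C i) x * ennreal ((cmod (f x))\<^sup>2) \<partial>M)" for i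
          unfolding nnI[OF Qf, symmetric] by (intro nn_integral_cong) (auto simp: indicator_def)
        then show ?thesis by simp
      qed
      also have "\<dots> = ennreal (s\<^sup>2) * (\<integral>\<^sup>+x. (\<Sum>i. indicator (C i) x * ennreal ((cmod (f x))\<^sup>2)) \<partial>M)"
        by (subst nn_integral_suminf) (use CM in measurable)
      also have "\<dots> = ennreal (s\<^sup>2) * ennreal ((l2norm M f)\<^sup>2)"
        using suminf_indicator[OF assms(9)] assms(10) nnI[OF f] by simp
      also have "\<dots> = ennreal ((s * l2norm M f)\<^sup>2)" by (simp add: ennreal_mult[symmetric] power_mult_distrib)
      finally have "(l2norm M (S f))\<^sup>2 \<le> (s * l2norm M f)\<^sup>2"
        by (subst (asm) ennreal_le_iff) auto
      then show ?thesis by (rule power2_le_imp_le) (simp add: s0)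
    qed
    show "opnorm M (\<Phi> T) \<le> s" unfolding S_def[symmetric]
    proof (rule opnorm_le)
      fix f assume f: "f \<in> L2 M" "l2norm M f \<le> 1"
      have "l2norm M (S f) \<le> s * l2norm M f" by (rule key[OF f(1)])
      also have "\<dots> \<le> s" using f(2) s0 by (simp add: mult_left_le)
      finally show "l2norm M (S f) \<le> s" .
    qed
  qed
  have ge: "(SUP j. ereal (mapnorm M (\<Phi>j j))) \<le> ereal (mapnorm M \<Phi>)"
    by (rule SUP_least) (simp add: ub)
  have le: "ereal (mapnorm M \<Phi>) \<le> (SUP j. ereal (mapnorm M (\<Phi>j j)))"
  proof (cases "(SUP j. ereal (mapnorm M (\<Phi>j j))) = \<infinity>")
    case True then show ?thesis by simp
  next
    case False
    let ?S = "SUP j. ereal (mapnorm M (\<Phi>j j))"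
    have low: "ereal (mapnorm M (\<Phi>j j)) \<le> ?S" for j by (rule SUP_upper) simp
    have S0: "0 \<le> ?S" using low[of 0] mapnorm_nonneg[OF assms(12)[of 0]] by (meson ereal_less_eq(5) order_trans)
    have fin: "?S = ereal (real_of_ereal ?S)" using False S0 by (cases ?S) auto
    have "mapnorm M \<Phi> \<le> real_of_ereal ?S"
    proof (rule lb)
      show "0 \<le> real_of_ereal ?S" using S0 by (simp add: real_of_ereal_pos)
      fix j show "mapnorm M (\<Phi>j j) \<le> real_of_ereal ?S" using low[of j] by (subst (asm) fin) simp
    qed
    then show ?thesis by (subst fin) simp
  qed
  show ?thesis using ge le by (rule antisym[rotated])
qed


end
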